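(* Let $(\mathcal{X},\mathcal{F},\sigma)$ be a probability space with an $\alpha$-homogeneous atomic filtration, $0<\alpha\le1/2$, and let $f\in L^1(\mathcal{X})$ satisfy $\|S(f)\|_\infty<\infty$. Then \[ \mathbb{E}\exp(f-\mathbb{E}f)\le e^{\|S(f)\|_\infty^2/(4\alpha)}. \]
   Context: An atomic filtration on a probability space $(\mathcal{X},\mathcal{F},\sigma)$ is an increasing sequence of $\sigma$-algebras $\mathcal{F}_n\subset\mathcal{F}$, $n\ge0$, with $\mathcal{F}_0=\{\varnothing,\mathcal{X}\}$, $\mathcal{F}$ generated by the $\mathcal{F}_n$, and such that for each $n$ there is a countable collection $\mathcal{D}_n$ of disjoint sets ("cubes") with every set of $\mathcal{F}_n$ a union of sets of $\mathcal{D}_n$. Write $\mathcal{D}=\bigcup_n\mathcal{D}_n$, $|A|=\sigma(A)$, and for $Q\in\mathcal{D}_n$ let $\operatorname{ch}Q=\{R\in\mathcal{D}_{n+1}:R\subset Q\}$. The filtration is $\alpha$-homogeneous if $|Q'|\ge\alpha|Q|$ for every cube $Q$ and every $Q'\in\operatorname{ch}Q$. For $|A|>0$, $\langle f\rangle_A=|A|^{-1}\int_A f$; $\mathbb{E}f=\langle f\rangle_{\mathcal{X}}$. Let $\mathbf{E}_Q f=\langle f\rangle_Q\mathbf{1}_Q$, $\Delta_Q=\sum_{R\in\operatorname{ch}Q}\mathbf{E}_R-\mathbf{E}_Q$, and $S f=\bigl(\sum_{Q\in\mathcal{D}}|\Delta_Q f|^2\bigr)^{1/2}$. *)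

theory Defs
  imports "HOL-Probability.Probability"
begin

definition atomic_filtration ::
  "'a measure \<Rightarrow> (nat \<Rightarrow> 'a set set) \<Rightarrow> (nat \<Rightarrow> 'a set set) \<Rightarrow> bool" where
  "atomic_filtration M F D \<longleftrightarrow>
     (\<forall>n. sigma_algebra (space M) (F n) \<and> F n \<subseteq> sets M) \<and>
     (\<forall>n. F n \<subseteq> F (Suc n)) \<and>
     F 0 = {{}, space M} \<and>
     sets M = sigma_sets (space M) (\<Union>n. F n) \<and>
     (\<forall>n. countable (D n) \<and> disjoint (D n) \<and> D n \<subseteq> F n \<and>
          (\<forall>A\<in>F n. \<exists>C\<subseteq>D n. A = \<Union>C))"

definition cube_children :: "(nat \<Rightarrow> 'a set set) \<Rightarrow> nat \<Rightarrow> 'a set \<Rightarrow> 'a set set" where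
  "cube_children D n Q = {R \<in> D (Suc n). R \<subseteq> Q}"

definition homogeneous_filtration ::
  "'a measure \<Rightarrow> (nat \<Rightarrow> 'a set set) \<Rightarrow> real \<Rightarrow> bool" where
  "homogeneous_filtration M D \<alpha> \<longleftrightarrow>
     (\<forall>n. \<forall>Q\<in>D n. \<forall>Q'\<in>cube_children D n Q. measure M Q' \<ge> \<alpha> * measure M Q)"

text \<open>Average of f over A (convention: 0 if A is a null set; only used for |A|>0).\<close>
definition cube_avg :: "'a measure \<Rightarrow> 'a set \<Rightarrow> ('a \<Rightarrow> real) \<Rightarrow> real" where
  "cube_avg M A f = (if measure M A > 0 then (\<integral>x\<in>A. f x \<partial>M) / measure M A else 0)"

definition cube_E :: "'a measure \<Rightarrow> 'a set \<Rightarrow> ('a \<Rightarrow> real) \<Rightarrow> 'a \<Rightarrow> real" where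
  "cube_E M Q f x = cube_avg M Q f * indicator Q x"

definition cube_Delta ::
  "'a measure \<Rightarrow> (nat \<Rightarrow> 'a set set) \<Rightarrow> nat \<Rightarrow> 'a set \<Rightarrow> ('a \<Rightarrow> real) \<Rightarrow> 'a \<Rightarrow> real" where
  "cube_Delta M D n Q f x =
     (\<Sum>\<^sub>\<infinity>R\<in>cube_children D n Q. cube_E M R f x) - cube_E M Q f x"

definition square_fun_sq ::
  "'a measure \<Rightarrow> (nat \<Rightarrow> 'a set set) \<Rightarrow> ('a \<Rightarrow> real) \<Rightarrow> 'a \<Rightarrow> ennreal" where
  "square_fun_sq M D f x =
     (\<Sum>\<^sub>\<infinity>(n, Q)\<in>Sigma UNIV D. ennreal ((cube_Delta M D n Q f x)\<^sup>2))"

definition square_fun ::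
  "'a measure \<Rightarrow> (nat \<Rightarrow> 'a set set) \<Rightarrow> ('a \<Rightarrow> real) \<Rightarrow> 'a \<Rightarrow> ennreal" where
  "square_fun M D f x =
     (if square_fun_sq M D f x = \<top> then \<top>
      else ennreal (sqrt (enn2real (square_fun_sq M D f x))))"

end

theory Submission
  imports Defs
begin


lemma exp_neg_upper6:
  fixes x :: real assumes "0 \<le> x"
  shows "exp (-x) \<le> 1 - x + x^2/2 - x^3/6 + x^4/24 - x^5/120 + x^6/720"
proof -
  obtain t where t: "exp (-x) = (\<Sum>m<7. ((-x) ^ m) / fact m) + (exp t / fact 7) * (-x) ^ 7"
    using Maclaurin_exp_le[of "-x" 7] by blast
  have "(exp t / fact 7) * (-x) ^ 7 \<le> 0"
    using assms by (simp add: mult_nonneg_nonpos)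
  moreover have "(\<Sum>m<7. ((-x) ^ m) / fact m) = 1 - x + x^2/2 - x^3/6 + x^4/24 - x^5/120 + x^6/720"
    by (simp add: eval_nat_numeral fact_numeral) 
  ultimately show ?thesis using t by linarith
qed

lemma exp_neg_lower5:
  fixes x :: real assumes "0 \<le> x"
  shows "1 - x + x^2/2 - x^3/6 + x^4/24 - x^5/120 \<le> exp (-x)"
proof -
  obtain t where t: "exp (-x) = (\<Sum>m<6. ((-x) ^ m) / fact m) + (exp t / fact 6) * (-x) ^ 6"
    using Maclaurin_exp_le[of "-x" 6] by blast
  have "0 \<le> (exp t / fact 6) * (-x) ^ 6"
    using assms by simp
  moreover have "(\<Sum>m<6. ((-x) ^ m) / fact m) = 1 - x + x^2/2 - x^3/6 + x^4/24 - x^5/120"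
    by (simp add: eval_nat_numeral fact_numeral) 
  ultimately show ?thesis using t by linarith
qed

lemma exp_neg_lower3:
  fixes x :: real assumes "0 \<le> x"
  shows "1 - x + x^2/2 - x^3/6 \<le> exp (-x)"
proof -
  obtain t where t: "exp (-x) = (\<Sum>m<4. ((-x) ^ m) / fact m) + (exp t / fact 4) * (-x) ^ 4"
    using Maclaurin_exp_le[of "-x" 4] by blast
  have "0 \<le> (exp t / fact 4) * (-x) ^ 4"
    using assms by simp
  moreover have "(\<Sum>m<4. ((-x) ^ m) / fact m) = 1 - x + x^2/2 - x^3/6"
    by (simp add: eval_nat_numeral fact_numeral) 
  ultimately show ?thesis using t by linarith
qed

lemma F2:
  fixes u :: real assumes "0 \<le> u" "u \<le> 1"
  shows "exp (-2*u) \<le> 1 - (2*u-u^2) + (2*u-u^2)^2/4 - (2*u-u^2)^3/24"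
proof -
  have "exp (-2*u) \<le> 1 - (2*u) + (2*u)^2/2 - (2*u)^3/6 + (2*u)^4/24 - (2*u)^5/120 + (2*u)^6/720"
    using exp_neg_upper6[of "2*u"] assms by simp
  moreover have "1 - (2*u-u^2) + (2*u-u^2)^2/4 - (2*u-u^2)^3/24
      - (1 - (2*u) + (2*u)^2/2 - (2*u)^3/6 + (2*u)^4/24 - (2*u)^5/120 + (2*u)^6/720)
      = u^4 * (1/12 + u/60 - 17*u^2/360)"
    by (simp add: field_simps power_def)
  moreover have "u^2 \<le> 1" using assms by (simp add: power_le_one)
  then have "0 \<le> u^4 * (1/12 + u/60 - 17*u^2/360)" using assms by simp
  ultimately show ?thesis by linarith
qed

lemma F1:
  fixes u :: real assumes "0 \<le> u" "u^2 \<le> 1/2"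
  shows "(1-u)^2*(1-2*u^2) + ((2*u-u^2)^2/2 - (2*u-u^2)^3/12)*(1 - u^2) \<le> exp (-2*u)"
proof -
  have u1: "u \<le> 1"
  proof (rule ccontr)
    assume "\<not> u \<le> 1" then have "1 < u" by simp
    then have "1 < u^2" by (simp add: less_1_mult power2_eq_square)
    with assms show False by simp
  qed
  have e: "1 - (2*u) + (2*u)^2/2 - (2*u)^3/6 + (2*u)^4/24 - (2*u)^5/120 \<le> exp (-2*u)"
    using exp_neg_lower5[of "2*u"] assms by simp
  have eq: "(1 - (2*u) + (2*u)^2/2 - (2*u)^3/6 + (2*u)^4/24 - (2*u)^5/120)
     - ((1-u)^2*(1-2*u^2) + ((2*u-u^2)^2/2 - (2*u-u^2)^3/12)*(1 - u^2))
     = u^2 * ((1 - 4*u/3)^2 + u^2*(17/12*(u - 73/85)^2 + 5263/15300 - u^3/2 + u^4/12))"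
    by (simp add: field_simps power_def)
  have u3: "u^3 \<le> 1/2"
  proof -
    have "u^3 = u * u^2" by (simp add: power_def)
    also have "\<dots> \<le> 1 * (1/2)" using assms u1 by (intro mult_mono) auto
    finally show ?thesis by simp
  qed
  have "0 \<le> (u - 73/85)^2" "0 \<le> u^4" by simp_all
  with u3 have "0 \<le> 17/12*(u - 73/85)^2 + 5263/15300 - u^3/2 + u^4/12" by linarith
  then have "0 \<le> u^2 * ((1 - 4*u/3)^2 + u^2*(17/12*(u - 73/85)^2 + 5263/15300 - u^3/2 + u^4/12))"
    by simp
  with e eq show ?thesis by linarith
qed


lemma quad_nonneg:
  fixes c0 c1 c2 p :: real
  assumes "0 \<le> c0" "0 \<le> c0 + c1/2 + c2/4" "c2 \<ge> 0 \<Longrightarrow> c1 + c2 \<le> 0" "0 \<le> p" "p \<le> 1/2"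
  shows "0 \<le> c0 + c1*p + c2*p^2"
proof (cases "c2 \<ge> 0")
  case True
  have eq: "c0 + c1*p + c2*p^2 = (c0 + c1/2 + c2/4) + (c1 + c2)*(p - 1/2) + c2*(p - 1/2)^2"
    by (simp add: field_simps power_def)
  have "0 \<le> (c1 + c2)*(p - 1/2)" using True assms by (intro mult_nonpos_nonpos) auto
  moreover have "0 \<le> c2*(p - 1/2)^2" using True by simp
  ultimately show ?thesis using eq assms(2) by linarith
next
  case False
  have eq: "c0 + c1*p + c2*p^2 = (1 - 2*p)*c0 + 2*p*(c0 + c1/2 + c2/4) + c2*(p*(p - 1/2))"
    by (simp add: field_simps power_def)
  have "0 \<le> c2*(p*(p - 1/2))" using False assms by (intro mult_nonpos_nonpos mult_nonneg_nonpos) auto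
  moreover have "0 \<le> (1 - 2*p)*c0" using assms by simp
  moreover have "0 \<le> 2*p*(c0 + c1/2 + c2/4)" using assms by simp
  ultimately show ?thesis using eq by linarith
qed

lemma tp_small:
  fixes p u :: real
  assumes p0: "0 < p" and ph: "p \<le> 1/2" and u0: "0 \<le> u" and u1: "u \<le> 1"
  shows "p * exp (-(2*(1-p)*u) - (1/(4*p))*(2*(1-p)*u)^2) + (1-p) * exp (2*p*u - (1/(4*p))*(2*p*u)^2) \<le> 1"
proof -
  define v where "v = 2*u - u^2"
  define k where "k = (1 - 2*p)/p"
  define a where "a = (1-u)^2"
  define \<beta> where "\<beta> = v^2/2 - v^3/12"
  define E where "E = exp (-2*u)"
  have uu: "u^2 \<le> u" using u0 u1 by (simp add: power2_eq_square mult_left_le_one_le)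
  have v0: "0 \<le> v" unfolding v_def using uu u0 by simp
  have av: "a = 1 - v" unfolding a_def v_def by (simp add: field_simps power_def)
  have v1: "v \<le> 1" using av unfolding a_def by (metis diff_ge_0_iff_ge zero_le_power2)
  have k0: "0 \<le> k" unfolding k_def using p0 ph by simp
  have \<beta>0: "0 \<le> \<beta>"
  proof -
    have "v^3 = v * v^2" by (simp add: power_def)
    also have "\<dots> \<le> 1 * v^2" using v0 v1 by (intro mult_right_mono) auto
    finally have "v^3 \<le> v^2" by simp
    moreover have "0 \<le> v^2" by simp
    ultimately show ?thesis unfolding \<beta>_def by linarith
  qed
  have ex1: "2*p*u - (1/(4*p))*(2*p*u)^2 = p* v"
    unfolding v_def using p0 by (simp add: field_simps power_def)
  have ex2: "-(2*(1-p)*u) - (1/(4*p))*(2*(1-p)*u)^2 = p* v + (-2*u - k*u^2)"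
    unfolding v_def k_def using p0 by (simp add: field_simps power_def)
  have Phi: "p * E \<le> (p + (1-2*p)*u^2) * (a + p*\<beta>)"
  proof -
    define c0 where "c0 = u^2*a"
    define c1 where "c1 = a*(1-2*u^2) + u^2*\<beta> - E"
    define c2 where "c2 = (1-2*u^2)*\<beta>"
    have eq: "(p + (1-2*p)*u^2) * (a + p*\<beta>) - p*E = c0 + c1*p + c2*p^2"
      unfolding c0_def c1_def c2_def by (simp add: field_simps power_def)
    have "0 \<le> c0" unfolding c0_def a_def by simp
    moreover have "0 \<le> c0 + c1/2 + c2/4"
    proof -
      have "c0 + c1/2 + c2/4 = (1 - v + v^2/4 - v^3/24)/2 - E/2"
        unfolding c0_def c1_def c2_def \<beta>_def av by (simp add: field_simps power_def)
      moreover have "E \<le> 1 - v + v^2/4 - v^3/24" unfolding E_def v_def using F2[OF u0 u1] by simp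
      ultimately show ?thesis by simp
    qed
    moreover have "c1 + c2 \<le> 0" if "c2 \<ge> 0"
    proof -
      have "u^2 \<le> 1/2"
      proof (rule ccontr)
        assume "\<not> u^2 \<le> 1/2"
        then have uu: "1/2 < u^2" by simp
        then have "u \<noteq> 0" by auto
        with u0 u1 have "0 < v" unfolding v_def by (simp add: power2_eq_square)
        then have "0 < \<beta>"
        proof -
          have "v^3 = v * v^2" by (simp add: power_def)
          also have "\<dots> \<le> 1 * v^2" using v0 v1 by (intro mult_right_mono) auto
          finally have "v^3 \<le> v^2" by simp
          moreover have "0 < v^2" using \<open>0 < v\<close> by simp
          ultimately show ?thesis unfolding \<beta>_def by linarith
        qed
        with uu have "c2 < 0" unfolding c2_def by (simp add: mult_neg_pos)
        with that show False by simp
      qed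
      then have "a*(1-2*u^2) + \<beta>*(1-u^2) \<le> E"
        unfolding a_def \<beta>_def E_def v_def using F1[OF u0] by simp
      then show ?thesis unfolding c1_def c2_def by (simp add: algebra_simps)
    qed
    ultimately have "0 \<le> c0 + c1*p + c2*p^2" using quad_nonneg[of c0 c1 c2 p] p0 ph by simp
    with eq show ?thesis by simp
  qed
  have kk: "p * (1 + k*u^2) = p + (1-2*p)*u^2" unfolding k_def using p0 by (simp add: field_simps)
  have ek: "exp (-2*u - k*u^2) * (1 + k*u^2) \<le> E"
  proof -
    have "1 + k*u^2 \<le> exp (k*u^2)" by (rule exp_ge_add_one_self)
    then have "exp (-2*u - k*u^2) * (1 + k*u^2) \<le> exp (-2*u - k*u^2) * exp (k*u^2)"
      by (intro mult_left_mono) auto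
    also have "\<dots> = E" unfolding E_def by (simp add: exp_add[symmetric])
    finally show ?thesis .
  qed
  have pos: "0 < p * (1 + k*u^2)" using p0 k0 by (simp add: add_pos_nonneg)
  have "p * (1 + k*u^2) * exp (-2*u - k*u^2) \<le> p * (1 + k*u^2) * (a + p*\<beta>)"
  proof -
    have "p * (1 + k*u^2) * exp (-2*u - k*u^2) = p * (exp (-2*u - k*u^2) * (1 + k*u^2))" by simp
    also have "\<dots> \<le> p * E" using ek p0 by (intro mult_left_mono) auto
    also have "\<dots> \<le> p * (1 + k*u^2) * (a + p*\<beta>)" using Phi kk by simp
    finally show ?thesis .
  qed
  then have e1: "exp (-2*u - k*u^2) \<le> a + p*\<beta>" using pos mult_le_cancel_left_pos by blast
  have e2: "a + p*\<beta> \<le> 1 - v + p* v^2/2 - p^2* v^3/6"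
  proof -
    have "p^2* v^3/6 \<le> p* v^3/12"
    proof -
      have "p^2* v^3 = p*(p* v^3)" by (simp add: power_def)
      also have "\<dots> \<le> p*((1/2)* v^3)" using p0 ph v0 by (intro mult_left_mono mult_right_mono) auto
      finally show ?thesis by simp
    qed
    then show ?thesis unfolding av \<beta>_def by (simp add: field_simps)
  qed
  have e3: "1 - p* v + (p* v)^2/2 - (p* v)^3/6 \<le> exp (-(p* v))"
    using exp_neg_lower3[of "p* v"] p0 v0 by simp
  have key: "(1-p) + p * exp (-2*u - k*u^2) \<le> exp (-(p* v))"
  proof -
    have "p * exp (-2*u - k*u^2) \<le> p * (1 - v + p* v^2/2 - p^2* v^3/6)"
      using e1 e2 p0 by (intro mult_left_mono) auto
    also have "\<dots> = 1 - p* v + (p* v)^2/2 - (p* v)^3/6 - (1 - p)" by (simp add: field_simps power_def)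
    finally show ?thesis using e3 by linarith
  qed
  have "p * exp (-(2*(1-p)*u) - (1/(4*p))*(2*(1-p)*u)^2) + (1-p) * exp (2*p*u - (1/(4*p))*(2*p*u)^2)
      = exp (p* v) * ((1-p) + p * exp (-2*u - k*u^2))"
  proof -
    have "exp (p* v + (-2*u - k*u^2)) = exp (p* v) * exp (-2*u - k*u^2)" by (rule exp_add)
    then show ?thesis unfolding ex1 ex2 by (simp add: algebra_simps)
  qed
  also have "\<dots> \<le> exp (p* v) * exp (-(p* v))" using key by (intro mult_left_mono) auto
  also have "\<dots> = 1" by (simp add: exp_minus)
  finally show ?thesis .
qed


lemma exp_one_le_4: "exp (1::real) \<le> 4"
proof -
  have "1/2 \<le> exp (-(1/2::real))" using exp_ge_add_one_self[of "-(1/2::real)"] by simp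
  then have h: "exp (1/2::real) \<le> 2"
    by (simp add: exp_minus field_simps)
  have "exp (1::real) = exp (1/2) * exp (1/2)" by (simp add: exp_add[symmetric])
  also have "\<dots> \<le> 2 * 2" using h by (intro mult_mono) auto
  finally show ?thesis by simp
qed

lemma cosh_bound:
  fixes y :: real assumes "0 \<le> y" "y \<le> 1"
  shows "exp (y - y^2/2) + exp (-y - y^2/2) \<le> 2"
proof -
  have bnd: "exp x \<le> (\<Sum>m<6. (x ^ m) / fact m) + 4 * x^6 / 720" if "\<bar>x\<bar> \<le> 1" for x :: real
  proof -
    obtain t where t: "\<bar>t\<bar> \<le> \<bar>x\<bar>" "exp x = (\<Sum>m<6. (x ^ m) / fact m) + (exp t / fact 6) * x ^ 6"
      using Maclaurin_exp_le[of x 6] by blast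
    have "exp t \<le> 4" using t(1) that exp_one_le_4
      by (meson abs_le_D1 exp_le_cancel_iff order.trans)
    then have "(exp t / fact 6) * x ^ 6 \<le> (4 / fact 6) * x^6"
      by (intro mult_right_mono divide_right_mono) auto
    then show ?thesis using t by (simp add: fact_numeral)
  qed
  have e1: "exp y \<le> 1 + y + y^2/2 + y^3/6 + y^4/24 + y^5/120 + 4*y^6/720"
    using bnd[of y] assms by (simp add: eval_nat_numeral fact_numeral)
  have e2: "exp (-y) \<le> 1 - y + y^2/2 - y^3/6 + y^4/24 - y^5/120 + 4*y^6/720"
    using bnd[of "-y"] assms by (simp add: eval_nat_numeral fact_numeral)
  have e3: "1 + y^2/2 + (y^2/2)^2/2 \<le> exp (y^2/2)"
    using exp_lower_Taylor_quadratic[of "y^2/2"] by (simp add: power2_eq_square)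
  have y64: "y^6 \<le> y^4"
    using assms by (simp add: power_decreasing)
  have "exp y + exp (-y) \<le> 2 * exp (y^2/2)"
  proof -
    have "exp y + exp (-y) \<le> 2 + y^2 + y^4/12 + y^6/90" using e1 e2 by simp
    also have "\<dots> \<le> 2 * (1 + y^2/2 + (y^2/2)^2/2)"
    proof -
      have "2 * (1 + y^2/2 + (y^2/2)^2/2) = 2 + y^2 + y^4/4" by (simp add: field_simps power_def)
      moreover have "0 \<le> y^4" by simp
      ultimately show ?thesis using y64 by linarith
    qed
    also have "\<dots> \<le> 2 * exp (y^2/2)" using e3 by simp
    finally show ?thesis .
  qed
  then have "(exp y + exp (-y)) * exp (-(y^2/2)) \<le> 2 * exp (y^2/2) * exp (-(y^2/2))"
    by (intro mult_right_mono) auto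
  also have "\<dots> = 2" by (simp add: exp_minus)
  finally show ?thesis by (simp add: algebra_simps exp_add[symmetric] exp_diff)
qed

lemma B_mono:
  fixes t y :: real assumes "0 < t" "t \<le> y"
  shows "t * (1 - exp (-y - y^2/2)) \<le> y * (1 - exp (-t - t^2/2))"
proof -
  define h where "h = (\<lambda>s::real. (1 - exp (-s - s^2/2)) / s)"
  have "h y \<le> h t"
  proof (rule DERIV_nonpos_imp_nonincreasing[OF assms(2)])
    fix x assume x: "t \<le> x" "x \<le> y"
    then have x0: "0 < x" using assms by simp
    let ?w = "x + x^2/2"
    have d: "(h has_real_derivative ((x*((1+x)*exp (-x - x^2/2)) - (1 - exp (-x - x^2/2))) / x^2)) (at x)"
      unfolding h_def using x0
      by (auto intro!: derivative_eq_intros simp: power2_eq_square field_simps)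
    have "1 + x + x^2 \<le> exp ?w"
    proof -
      have "1 + ?w + ?w^2/2 \<le> exp ?w" using exp_lower_Taylor_quadratic[of ?w] x0 by simp
      moreover have "x^2 \<le> ?w^2" using x0 by (intro power_mono) auto
      ultimately show ?thesis by simp
    qed
    then have "(1 + x + x^2) * exp (-?w) \<le> exp ?w * exp (-?w)"
      by (intro mult_right_mono) auto
    moreover have "exp ?w * exp (-?w) = 1" by (simp only: exp_minus) simp
    moreover have "-?w = -x - x^2/2" by simp
    ultimately have "(1 + x + x^2) * exp (-x - x^2/2) \<le> 1" by metis
    then have "x*((1+x)*exp (-x - x^2/2)) - (1 - exp (-x - x^2/2)) \<le> 0"
      by (simp add: algebra_simps power2_eq_square)
    then have "((x*((1+x)*exp (-x - x^2/2)) - (1 - exp (-x - x^2/2))) / x^2) \<le> 0"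
      by (intro divide_nonpos_pos) (use x0 in auto)
    with d show "\<exists>d. (h has_real_derivative d) (at x) \<and> d \<le> 0" by blast
  qed
  then show ?thesis unfolding h_def using assms by (simp add: field_simps)
qed

lemma tp_large:
  fixes p y :: real
  assumes "1/2 \<le> p" "p < 1" "0 \<le> y" "y \<le> 1"
  shows "p * exp (-((1-p)*y/p) - (1/2)*((1-p)*y/p)^2) + (1-p) * exp (y - (1/2)*y^2) \<le> 1"
proof (cases "y = 0")
  case True then show ?thesis by simp
next
  case False
  define t where "t = (1-p)*y/p"
  have p0: "0 < p" using assms by simp
  have y0: "0 < y" using False assms by simp
  have t0: "0 < t" unfolding t_def using assms y0 by simp
  have ty: "t \<le> y"
  proof -
    have "(1-p)*y \<le> p*y" using assms y0 by (intro mult_right_mono) auto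
    then show ?thesis unfolding t_def using p0 by (simp add: divide_le_eq mult.commute)
  qed
  have ct: "exp (y - y^2/2) - 1 \<le> 1 - exp (-y - y^2/2)" using cosh_bound[of y] assms by simp
  have bm: "t * (1 - exp (-y - y^2/2)) \<le> y * (1 - exp (-t - t^2/2))" using B_mono[OF t0 ty] .
  have qt: "(1-p) * y = p * t" unfolding t_def using p0 by simp
  have "(1-p) * y * (exp (y - y^2/2) - 1) \<le> (1-p) * y * (1 - exp (-y - y^2/2))"
    using ct assms y0 by (intro mult_left_mono) auto
  also have "\<dots> = p * (t * (1 - exp (-y - y^2/2)))" using qt by simp
  also have "\<dots> \<le> p * (y * (1 - exp (-t - t^2/2)))" using bm p0 by (intro mult_left_mono) auto
  finally have "y * ((1-p) * (exp (y - y^2/2) - 1)) \<le> y * (p * (1 - exp (-t - t^2/2)))"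
    by (simp add: algebra_simps)
  then have "(1-p) * (exp (y - y^2/2) - 1) \<le> p * (1 - exp (-t - t^2/2))"
    using y0 by simp
  then show ?thesis unfolding t_def[symmetric] by (simp add: algebra_simps)
qed


lemma ln_lower_pos:
  fixes u :: real assumes "0 \<le> u"
  shows "u - u^2/2 \<le> ln (1 + u)"
proof -
  define f where "f = (\<lambda>s::real. ln (1 + s) - s + s^2/2)"
  have "f 0 \<le> f u"
  proof (rule DERIV_nonneg_imp_nondecreasing[OF assms])
    fix x :: real assume x: "0 \<le> x" "x \<le> u"
    have d: "(f has_real_derivative (1/(1+x) - 1 + x)) (at x)"
      unfolding f_def using x by (auto intro!: derivative_eq_intros simp: power2_eq_square)
    have "1/(1+x) - 1 + x = x^2/(1+x)" using x by (simp add: field_simps power2_eq_square)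
    moreover have "0 \<le> x^2/(1+x)" using x by simp
    ultimately show "\<exists>d. (f has_real_derivative d) (at x) \<and> 0 \<le> d" using d by auto
  qed
  then show ?thesis unfolding f_def by simp
qed

lemma ln_lower_neg:
  fixes u :: real assumes "-1 < u" "u \<le> 0"
  shows "u - u^2/(2*(1+u)) \<le> ln (1 + u)"
proof -
  define f where "f = (\<lambda>s::real. ln (1 + s) - s + s^2/(2*(1+s)))"
  have "f 0 \<le> f u"
  proof (rule DERIV_nonpos_imp_nonincreasing[OF assms(2)])
    fix x :: real assume x: "u \<le> x" "x \<le> 0"
    then have x1: "0 < 1 + x" using assms by simp
    have d: "(f has_real_derivative (1/(1+x) - 1 + (2*x*(2*(1+x)) - x^2*2)/(2*(1+x))^2)) (at x)"
      unfolding f_def using x1 by (auto intro!: derivative_eq_intros simp: power2_eq_square)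
    have "1/(1+x) - 1 + (2*x*(2*(1+x)) - x^2*2)/(2*(1+x))^2 = - (x^2/(2*(1+x)^2))"
    proof -
      define D where "D = 1 + x"
      have D0: "D \<noteq> 0" using x1 unfolding D_def by simp
      have xD: "x = D - 1" unfolding D_def by simp
      show ?thesis unfolding D_def[symmetric] unfolding xD using D0
        by (simp add: field_simps power2_eq_square)
    qed
    moreover have "0 \<le> x^2/(2*(1+x)^2)" using x by simp
    ultimately show "\<exists>d. (f has_real_derivative d) (at x) \<and> d \<le> 0" using d by auto
  qed
  then show ?thesis unfolding f_def by simp
qed

lemma tangent_bound:
  fixes c x y :: real
  assumes c: "1/2 \<le> c" and y0: "0 \<le> y" and yc: "2*c*y \<le> 1" and x0: "0 \<le> x"
  shows "exp (x - c*x^2) \<le> exp (y - c*y^2) * (1 + (1 - 2*c*y)*(x - y))"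
proof -
  define s where "s = 1 - 2*c*y"
  define h where "h = x - y"
  have s0: "0 \<le> s" and s1: "s \<le> 1" unfolding s_def using yc c y0 by auto
  have split: "x - c*x^2 = (y - c*y^2) + (s*h - c*h^2)"
    unfolding s_def h_def by (simp add: field_simps power2_eq_square)
  have key: "exp (s*h - c*h^2) \<le> 1 + s*h"
  proof (cases "0 \<le> h")
    case True
    define u where "u = s*h"
    have u0: "0 \<le> u" unfolding u_def using True s0 by simp
    have "u^2 \<le> h^2" unfolding u_def using s0 s1 True
      by (simp add: power_mult_distrib mult_left_le_one_le power_le_one)
    also have "\<dots> = 1 * h^2" by simp
    also have "\<dots> \<le> (2*c)*h^2" by (rule mult_right_mono) (use c in auto)
    finally have "s*h - c*h^2 \<le> u - u^2/2" unfolding u_def by simp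
    also have "\<dots> \<le> ln (1 + u)" using ln_lower_pos[OF u0] .
    finally have "exp (s*h - c*h^2) \<le> exp (ln (1+u))" by simp
    also have "\<dots> = 1 + u" using u0 by simp
    finally show ?thesis unfolding u_def .
  next
    case False
    define u where "u = s*h"
    have u0: "u \<le> 0" unfolding u_def using False s0 by (simp add: mult_nonneg_nonpos)
    have hy: "-y \<le> h" unfolding h_def using x0 by simp
    have "s*(-y) \<le> s*h" using hy s0 by (rule mult_left_mono)
    then have u1: "1 - s*y \<le> 1 + u" unfolding u_def by simp
    have "2*c*(1 - s*y) - s^2 = 2*c - 1 + 2*c*y" unfolding s_def by (simp add: field_simps power2_eq_square)
    also have "\<dots> \<ge> 0" using c y0 by simp
    finally have "s^2 \<le> 2*c*(1 - s*y)" by simp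
    also have "\<dots> \<le> 2*c*(1+u)" using u1 c by simp
    finally have ss: "s^2 \<le> 2*c*(1+u)" .
    have pos: "0 < 1 + u"
    proof (cases "s = 0")
      case True then show ?thesis unfolding u_def by simp
    next
      case False
      then have "0 < s^2" by simp
      with ss have "0 < 2*c*(1+u)" by linarith
      then show ?thesis using c by (simp add: zero_less_mult_iff)
    qed
    have "u^2/(2*(1+u)) \<le> c*h^2"
    proof -
      have "u^2 = s^2*h^2" unfolding u_def by (simp add: power_mult_distrib)
      also have "\<dots> \<le> (2*c*(1+u))*h^2" using ss by (simp add: mult_right_mono)
      finally have "u^2 \<le> (c*h^2)*(2*(1+u))" by (simp add: algebra_simps)
      then show ?thesis using pos by (simp add: divide_le_eq)
    qed
    then have "s*h - c*h^2 \<le> u - u^2/(2*(1+u))" unfolding u_def by simp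
    also have "\<dots> \<le> ln (1 + u)" using ln_lower_neg[of u] pos u0 by simp
    finally have "exp (s*h - c*h^2) \<le> exp (ln (1+u))" by simp
    also have "\<dots> = 1 + u" using pos by simp
    finally show ?thesis unfolding u_def .
  qed
  have "exp (x - c*x^2) = exp (y - c*y^2) * exp (s*h - c*h^2)" unfolding split by (rule exp_add)
  also have "\<dots> \<le> exp (y - c*y^2) * (1 + s*h)" using key by (intro mult_left_mono) auto
  finally show ?thesis unfolding s_def h_def .
qed


lemma two_point:
  fixes p y :: real
  assumes p0: "0 < p" and p1: "p < 1" and y0: "0 \<le> y" and yc: "2 * max (1/2) (1/(4*p)) * y \<le> 1"
  shows "p * exp (-((1-p)*y/p) - max (1/2) (1/(4*p)) * ((1-p)*y/p)^2)
         + (1-p) * exp (y - max (1/2) (1/(4*p)) * y^2) \<le> 1"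
proof (cases "p \<le> 1/2")
  case True
  have c: "max (1/2) (1/(4*p)) = 1/(4*p)" using True p0 by (simp add: field_simps)
  define u where "u = y/(2*p)"
  have u0: "0 \<le> u" unfolding u_def using y0 p0 by simp
  have u1: "u \<le> 1" using yc unfolding c u_def using p0 by (simp add: field_simps)
  have yu: "y = 2*p*u" unfolding u_def using p0 by simp
  have tu: "(1-p)*y/p = 2*(1-p)*u" unfolding yu using p0 by simp
  show ?thesis unfolding c tu unfolding yu using tp_small[OF p0 True u0 u1] by simp
next
  case False
  have c: "max (1/2) (1/(4*p)) = 1/2" using False p0 by (simp add: field_simps)
  have y1: "y \<le> 1" using yc unfolding c by simp
  show ?thesis unfolding c using tp_large[of p y] False p1 y0 y1 by simp
qed

lemma per_neg:
  fixes r x :: "'i \<Rightarrow> real" and P :: "'i set" and \<alpha> \<pi> t yb :: real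
  assumes fin: "finite P" and r0: "\<And>j. j \<in> P \<Longrightarrow> 0 \<le> r j" and rs: "(\<Sum>j\<in>P. r j) = 1"
    and x0: "\<And>j. j \<in> P \<Longrightarrow> 0 \<le> x j" and yb: "yb = (\<Sum>j\<in>P. r j * x j)"
    and p0: "0 < \<pi>" and p1: "\<pi> < 1" and a0: "0 < \<alpha>" and ap: "\<alpha> \<le> \<pi>" and ah: "\<alpha> \<le> 1/2"
    and t0: "0 \<le> t" and pt: "\<pi> * t = (1-\<pi>) * yb"
  shows "\<pi> * exp (-t - (1/(4*\<alpha>)) * t^2) + (1-\<pi>) * (\<Sum>j\<in>P. r j * exp (x j - (1/(4*\<alpha>)) * (x j)^2)) \<le> 1"
proof -
  define C where "C = 1/(4*\<alpha>)"
  define c where "c = max (1/2) (1/(4*\<pi>))"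
  have c12: "1/2 \<le> c" unfolding c_def by simp
  have c0: "0 < c" using c12 by simp
  have cC: "c \<le> C" unfolding c_def C_def using a0 ap ah p0 by (auto simp: field_simps)
  have gC: "exp (z - C*z^2) \<le> exp (z - c*z^2)" for z
  proof -
    have "c*z^2 \<le> C*z^2" using cC by (simp add: mult_right_mono)
    then show ?thesis by simp
  qed
  have yb0: "0 \<le> yb" unfolding yb using r0 x0 by (auto intro!: sum_nonneg)
  define ys where "ys = min yb (1/(2*c))"
  have ys0: "0 \<le> ys" unfolding ys_def using yb0 c0 by simp
  have ysc: "2*c*ys \<le> 1" unfolding ys_def using c0 by (simp add: min_def field_simps)
  have ysyb: "ys \<le> yb" unfolding ys_def by simp
  have sum_bound: "(\<Sum>j\<in>P. r j * exp (x j - C * (x j)^2))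
      \<le> exp (ys - c*ys^2) * (1 + (1 - 2*c*ys)*(yb - ys))"
  proof -
    have "(\<Sum>j\<in>P. r j * exp (x j - C * (x j)^2)) \<le> (\<Sum>j\<in>P. r j * (exp (ys - c*ys^2) * (1 + (1 - 2*c*ys)*(x j - ys))))"
    proof (rule sum_mono)
      fix j assume j: "j \<in> P"
      have "exp (x j - C * (x j)^2) \<le> exp (x j - c * (x j)^2)" by (rule gC)
      also have "\<dots> \<le> exp (ys - c*ys^2) * (1 + (1 - 2*c*ys)*(x j - ys))"
        by (rule tangent_bound[OF c12 ys0 ysc x0[OF j]])
      finally show "r j * exp (x j - C * (x j)^2) \<le> r j * (exp (ys - c*ys^2) * (1 + (1 - 2*c*ys)*(x j - ys)))"
        using r0[OF j] by (rule mult_left_mono)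
    qed
    also have "\<dots> = exp (ys - c*ys^2) * ((\<Sum>j\<in>P. r j) + (1 - 2*c*ys)*((\<Sum>j\<in>P. r j * x j) - ys * (\<Sum>j\<in>P. r j)))"
      by (simp add: sum_distrib_left sum_distrib_right sum.distrib sum_subtractf algebra_simps)
    also have "\<dots> = exp (ys - c*ys^2) * (1 + (1 - 2*c*ys)*(yb - ys))" using rs yb by simp
    finally show ?thesis .
  qed
  show ?thesis
  proof (cases "yb \<le> 1/(2*c)")
    case True
    then have ys: "ys = yb" unfolding ys_def by simp
    have t: "t = (1-\<pi>)*yb/\<pi>" using pt p0 by (simp add: field_simps)
    have tp: "\<pi> * exp (-t - c*t^2) + (1-\<pi>) * exp (yb - c*yb^2) \<le> 1"
      using two_point[OF p0 p1 yb0] True c0 unfolding c_def[symmetric] t by (simp add: field_simps)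
    have "\<pi> * exp (-t - C*t^2) + (1-\<pi>) * (\<Sum>j\<in>P. r j * exp (x j - C * (x j)^2))
        \<le> \<pi> * exp (-t - c*t^2) + (1-\<pi>) * exp (yb - c*yb^2)"
      using sum_bound gC[of "-t"] p0 p1 unfolding ys
      by (intro add_mono mult_left_mono) auto
    with tp show ?thesis unfolding C_def by simp
  next
    case False
    then have ys: "ys = 1/(2*c)" unfolding ys_def by simp
    then have s0: "1 - 2*c*ys = 0" using c0 by simp
    define ts where "ts = (1-\<pi>)*ys/\<pi>"
    have ts0: "0 \<le> ts" unfolding ts_def using p0 p1 ys0 by simp
    have tst: "ts \<le> t"
    proof -
      have "(1-\<pi>)*ys \<le> (1-\<pi>)*yb" using ysyb p1 by (intro mult_left_mono) auto
      then show ?thesis unfolding ts_def using pt p0 by (simp add: divide_le_eq mult.commute)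
    qed
    have mono: "exp (-t - c*t^2) \<le> exp (-ts - c*ts^2)"
    proof -
      have "c*ts^2 \<le> c*t^2" using c0 ts0 tst by (intro mult_left_mono power_mono) auto
      then show ?thesis using tst by simp
    qed
    have tp: "\<pi> * exp (-ts - c*ts^2) + (1-\<pi>) * exp (ys - c*ys^2) \<le> 1"
      using two_point[OF p0 p1 ys0] ysc unfolding c_def[symmetric] ts_def by simp
    have "\<pi> * exp (-t - C*t^2) + (1-\<pi>) * (\<Sum>j\<in>P. r j * exp (x j - C * (x j)^2))
        \<le> \<pi> * exp (-ts - c*ts^2) + (1-\<pi>) * exp (ys - c*ys^2)"
    proof (intro add_mono mult_left_mono)
      show "exp (-t - C*t^2) \<le> exp (-ts - c*ts^2)" using gC[of "-t"] mono by simp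
      show "(\<Sum>j\<in>P. r j * exp (x j - C * (x j)^2)) \<le> exp (ys - c*ys^2)"
        using sum_bound s0 by simp
    qed (use p0 p1 in auto)
    with tp show ?thesis unfolding C_def by simp
  qed
qed


lemma key_lemma:
  fixes p x :: "'i \<Rightarrow> real" and I :: "'i set" and \<alpha> :: real
  assumes fin: "finite I" and pa: "\<And>i. i \<in> I \<Longrightarrow> \<alpha> \<le> p i" and ps: "(\<Sum>i\<in>I. p i) = 1"
    and mean: "(\<Sum>i\<in>I. p i * x i) = 0" and a0: "0 < \<alpha>" and ah: "\<alpha> \<le> 1/2"
  shows "(\<Sum>i\<in>I. p i * exp (x i - (1/(4*\<alpha>)) * (x i)^2)) \<le> 1"
proof -
  define C where "C = 1/(4*\<alpha>)"
  have C12: "1/2 \<le> C" unfolding C_def using a0 ah by (simp add: field_simps)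
  define g where "g = (\<lambda>i. exp (x i - C * (x i)^2))"
  define N where "N = {i\<in>I. x i < 0}"
  define P where "P = {i\<in>I. 0 \<le> x i}"
  have p0: "\<And>i. i \<in> I \<Longrightarrow> 0 < p i" using pa a0 by (meson less_le_trans)
  have INP: "I = N \<union> P" "N \<inter> P = {}" unfolding N_def P_def by auto
  have finN: "finite N" and finP: "finite P" using fin unfolding N_def P_def by auto
  have sumsplit: "\<And>f. (\<Sum>i\<in>I. f i) = (\<Sum>i\<in>N. f i) + (\<Sum>i\<in>P. f i)"
    using INP finN finP by (simp add: sum.union_disjoint)
  define m where "m = (\<Sum>j\<in>P. p j * x j)"
  have mN: "(\<Sum>i\<in>N. p i * (- x i)) = m"
    using mean sumsplit[of "\<lambda>i. p i * x i"] unfolding m_def by (simp add: sum_negf)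
  show ?thesis
  proof (cases "N = {}")
    case True
    have "(\<Sum>i\<in>I. p i * g i) \<le> (\<Sum>i\<in>I. p i * (1 + x i))"
    proof (rule sum_mono)
      fix i assume i: "i \<in> I"
      then have "0 \<le> x i" using True unfolding N_def by auto
      then have "g i \<le> exp (0 - C*0^2) * (1 + (1 - 2*C*0)*(x i - 0))"
        unfolding g_def by (intro tangent_bound[OF C12]) auto
      then show "p i * g i \<le> p i * (1 + x i)" using p0[OF i] by simp
    qed
    also have "\<dots> = 1" using ps mean by (simp add: algebra_simps sum.distrib)
    finally show ?thesis unfolding g_def C_def .
  next
    case False
    have tN: "\<And>i. i \<in> N \<Longrightarrow> 0 < p i * (- x i)"
      unfolding N_def using p0 by (auto simp: mult_pos_neg)
    have m0: "0 < m"
    proof -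
      have "0 < (\<Sum>i\<in>N. p i * (- x i))" using tN False finN by (intro sum_pos) auto
      then show ?thesis using mN by simp
    qed
    have "P \<noteq> {}" using m0 unfolding m_def by auto
    define W where "W = (\<Sum>j\<in>P. p j)"
    have W0: "0 < W" unfolding W_def using \<open>P \<noteq> {}\<close> finP p0 INP by (intro sum_pos) auto
    define yb where "yb = m / W"
    define r where "r = (\<lambda>j. p j / W)"
    have r0: "\<And>j. j \<in> P \<Longrightarrow> 0 \<le> r j" unfolding r_def using p0 W0 INP by (simp add: less_imp_le)
    have rs: "(\<Sum>j\<in>P. r j) = 1" unfolding r_def W_def using W0 W_def by (simp add: sum_divide_distrib[symmetric])
    have ryb: "yb = (\<Sum>j\<in>P. r j * x j)" unfolding r_def yb_def m_def
      by (simp add: sum_divide_distrib[symmetric] mult.commute)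
    have xP: "\<And>j. j \<in> P \<Longrightarrow> 0 \<le> x j" unfolding P_def by auto
    define w where "w = (\<lambda>i. p i * (- x i) * W / m)"
    have w0: "\<And>i. i \<in> N \<Longrightarrow> 0 < w i" unfolding w_def
      by (rule divide_pos_pos[OF mult_pos_pos[OF tN W0] m0])
    have pNle: "\<And>i. i \<in> N \<Longrightarrow> p i * (- x i) \<le> m"
    proof -
      fix i assume i: "i \<in> N"
      have "p i * (- x i) = (\<Sum>k\<in>{i}. p k * (- x k))" by simp
      also have "\<dots> \<le> (\<Sum>k\<in>N. p k * (- x k))"
        using i finN tN by (intro sum_mono2) (auto intro: less_imp_le)
      finally show "p i * (- x i) \<le> m" using mN by simp
    qed
    have wW: "\<And>i. i \<in> N \<Longrightarrow> w i \<le> W"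
    proof -
      fix i assume i: "i \<in> N"
      have "p i * (- x i) * W \<le> m * W" using pNle[OF i] W0 by (intro mult_right_mono) auto
      then have "p i * (- x i) * W / m \<le> W" using m0 by (simp only: divide_le_eq) (simp add: mult.commute)
      then show "w i \<le> W" unfolding w_def .
    qed
    have piW: "\<And>i. i \<in> N \<Longrightarrow> p i + W \<le> 1"
    proof -
      fix i assume i: "i \<in> N"
      have "p i = (\<Sum>k\<in>{i}. p k)" by simp
      also have "\<dots> \<le> (\<Sum>k\<in>N. p k)"
        using i finN p0 INP by (intro sum_mono2) (auto intro: less_imp_le)
      finally have "p i + W \<le> (\<Sum>k\<in>N. p k) + (\<Sum>k\<in>P. p k)" unfolding W_def by simp
      also have "\<dots> = 1" using ps sumsplit[of p] by simp
      finally show "p i + W \<le> 1" .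
    qed
    have each: "p i * g i + w i * (\<Sum>j\<in>P. r j * g j) \<le> p i + w i" if i: "i \<in> N" for i
    proof -
      have iI: "i \<in> I" using i INP by auto
      define \<pi> where "\<pi> = p i / (p i + w i)"
      have pw0: "0 < p i + w i" using p0[OF iI] w0[OF i] by simp
      have \<pi>0: "0 < \<pi>" unfolding \<pi>_def using p0[OF iI] pw0 by simp
      have \<pi>1: "\<pi> < 1" unfolding \<pi>_def using w0[OF i] pw0 by simp
      have a\<pi>: "\<alpha> \<le> \<pi>"
      proof -
        have "p i * (p i + w i) \<le> p i * 1" using wW[OF i] piW[OF i] p0[OF iI]
          by (intro mult_left_mono) auto
        then have "p i \<le> p i / (p i + w i)" using pw0 by (simp add: le_divide_eq)
        then show ?thesis unfolding \<pi>_def using pa[OF iI] by linarith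
      qed
      have t0: "0 \<le> - x i" using i unfolding N_def by simp
      have pt: "\<pi> * (- x i) = (1-\<pi>) * yb"
      proof -
        have "1 - \<pi> = w i / (p i + w i)" unfolding \<pi>_def using pw0 by (simp add: field_simps)
        moreover have "w i * yb = p i * (- x i)" unfolding w_def yb_def using W0 m0 by simp
        ultimately show ?thesis unfolding \<pi>_def using pw0 by (simp add: field_simps)
      qed
      have pn: "\<pi> * exp (-(- x i) - C * (- x i)^2) + (1-\<pi>) * (\<Sum>j\<in>P. r j * exp (x j - C * (x j)^2)) \<le> 1"
        using per_neg[OF finP r0 rs xP ryb \<pi>0 \<pi>1 a0 a\<pi> ah t0 pt] unfolding C_def by simp
      then have "(p i + w i) * (\<pi> * g i + (1-\<pi>) * (\<Sum>j\<in>P. r j * g j)) \<le> (p i + w i) * 1"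
        unfolding g_def using pw0 by (intro mult_left_mono) auto
      moreover have e1: "(p i + w i) * \<pi> = p i" "(p i + w i) * (1 - \<pi>) = w i"
        unfolding \<pi>_def using pw0 by (simp_all add: field_simps)
      moreover have "(p i + w i) * (\<pi> * g i + (1-\<pi>) * (\<Sum>j\<in>P. r j * g j))
          = ((p i + w i) * \<pi>) * g i + ((p i + w i) * (1-\<pi>)) * (\<Sum>j\<in>P. r j * g j)"
        by (simp add: algebra_simps)
      ultimately show ?thesis by simp
    qed
    have sumw: "(\<Sum>i\<in>N. w i) = W"
    proof -
      have "(\<Sum>i\<in>N. w i) = (\<Sum>i\<in>N. p i * (- x i)) * W / m"
        unfolding w_def by (simp add: sum_distrib_right sum_divide_distrib)
      then show ?thesis using mN m0 by simp
    qed
    have "(\<Sum>i\<in>N. p i * g i + w i * (\<Sum>j\<in>P. r j * g j)) \<le> (\<Sum>i\<in>N. p i + w i)"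
      using each by (rule sum_mono)
    moreover have "(\<Sum>i\<in>N. p i * g i + w i * (\<Sum>j\<in>P. r j * g j)) = (\<Sum>i\<in>N. p i * g i) + W * (\<Sum>j\<in>P. r j * g j)"
      by (simp only: sum.distrib sum_distrib_right[symmetric] sumw)
    moreover have "(\<Sum>i\<in>N. p i + w i) = (\<Sum>i\<in>N. p i) + W"
      by (simp only: sum.distrib sumw)
    ultimately have "(\<Sum>i\<in>N. p i * g i) + W * (\<Sum>j\<in>P. r j * g j) \<le> (\<Sum>i\<in>N. p i) + W"
      by simp
    moreover have "W * (\<Sum>j\<in>P. r j * g j) = (\<Sum>j\<in>P. p j * g j)"
      unfolding r_def using W0 by (simp add: sum_distrib_left)
    moreover have "(\<Sum>i\<in>N. p i) + W = 1" using ps sumsplit[of p] unfolding W_def by simp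
    ultimately have "(\<Sum>i\<in>N. p i * g i) + (\<Sum>j\<in>P. p j * g j) \<le> 1" by simp
    then show ?thesis using sumsplit[of "\<lambda>i. p i * g i"] unfolding g_def C_def by simp
  qed
qed




locale filt = prob_space M for M :: "'a measure" +
  fixes F D :: "nat \<Rightarrow> 'a set set" and \<alpha> :: real
  assumes af: "atomic_filtration M F D" and hom: "homogeneous_filtration M D \<alpha>"
    and a0: "0 < \<alpha>" and ah: "\<alpha> \<le> 1/2"
begin

lemma F_sa: "sigma_algebra (space M) (F n)" and F_sets: "F n \<subseteq> sets M"
  using af unfolding atomic_filtration_def by auto

lemma F_Suc: "F n \<subseteq> F (Suc n)" using af unfolding atomic_filtration_def by auto

lemma F_mono: "m \<le> n \<Longrightarrow> F m \<subseteq> F n"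
  by (rule lift_Suc_mono_le[of F]) (use F_Suc in auto)

lemma F0: "F 0 = {{}, space M}" using af unfolding atomic_filtration_def by auto

lemma sets_eq: "sets M = sigma_sets (space M) (\<Union>n. F n)" using af unfolding atomic_filtration_def by auto

lemma D_sub: "D n \<subseteq> F n" and D_disj: "disjoint (D n)" and D_count: "countable (D n)"
  and F_union: "A \<in> F n \<Longrightarrow> \<exists>C\<subseteq>D n. A = \<Union>C"
  using af unfolding atomic_filtration_def by auto

lemma D_sets: "Q \<in> D n \<Longrightarrow> Q \<in> sets M" using D_sub F_sets by blast

lemma D_space: "Q \<in> D n \<Longrightarrow> Q \<subseteq> space M" using D_sets sets.sets_into_space by blast

lemma space_F: "space M \<in> F n" using F_sa[of n] by (meson algebra.top sigma_algebra.axioms(1))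

lemma D_disj': "Q \<in> D n \<Longrightarrow> R \<in> D n \<Longrightarrow> Q \<noteq> R \<Longrightarrow> Q \<inter> R = {}"
  using D_disj unfolding disjoint_def by blast

lemma F_cover: "A \<in> F n \<Longrightarrow> x \<in> A \<Longrightarrow> \<exists>Q\<in>D n. x \<in> Q \<and> Q \<subseteq> A"
  using F_union by blast

lemma ex1_cube: "x \<in> space M \<Longrightarrow> \<exists>!Q. Q \<in> D n \<and> x \<in> Q"
proof -
  assume x: "x \<in> space M"
  obtain Q where "Q \<in> D n" "x \<in> Q" using F_cover[OF space_F x] by blast
  moreover have "R = Q" if "R \<in> D n" "x \<in> R" for R
    using D_disj'[of R n Q] that \<open>Q \<in> D n\<close> \<open>x \<in> Q\<close> by blast
  ultimately show ?thesis by blast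
qed

definition cube :: "nat \<Rightarrow> 'a \<Rightarrow> 'a set" where
  "cube n x = (THE Q. Q \<in> D n \<and> x \<in> Q)"

lemma cube: "x \<in> space M \<Longrightarrow> cube n x \<in> D n \<and> x \<in> cube n x"
  unfolding cube_def using theI'[OF ex1_cube] by blast

lemma cube_D: "x \<in> space M \<Longrightarrow> cube n x \<in> D n" and cube_in: "x \<in> space M \<Longrightarrow> x \<in> cube n x"
  using cube by auto

lemma cube_eq: "x \<in> space M \<Longrightarrow> Q \<in> D n \<Longrightarrow> x \<in> Q \<Longrightarrow> cube n x = Q"
  using ex1_cube cube by blast

lemma cube_F_sub: "A \<in> F m \<Longrightarrow> m \<le> n \<Longrightarrow> x \<in> space M \<Longrightarrow> x \<in> A \<Longrightarrow> cube n x \<subseteq> A"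
proof -
  assume A: "A \<in> F m" "m \<le> n" "x \<in> space M" "x \<in> A"
  then have "A \<in> F n" using F_mono by blast
  then obtain Q where "Q \<in> D n" "x \<in> Q" "Q \<subseteq> A" using F_cover A by blast
  then show ?thesis using cube_eq A by blast
qed

lemma cube_F_disj: "A \<in> F m \<Longrightarrow> m \<le> n \<Longrightarrow> x \<in> space M \<Longrightarrow> x \<notin> A \<Longrightarrow> cube n x \<inter> A = {}"
proof (rule ccontr)
  assume A: "A \<in> F m" "m \<le> n" "x \<in> space M" "x \<notin> A" and ne: "cube n x \<inter> A \<noteq> {}"
  then obtain y where y: "y \<in> cube n x" "y \<in> A" by blast
  have ys: "y \<in> space M" using y D_space cube_D A(3) by blast
  have "cube n y = cube n x" using cube_eq[OF ys cube_D[OF A(3)] y(1)] .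
  moreover have "cube n y \<subseteq> A" using cube_F_sub[OF A(1,2) ys y(2)] .
  ultimately show False using cube_in[OF A(3)] A(4) by blast
qed

lemma cube_mono: "m \<le> n \<Longrightarrow> x \<in> space M \<Longrightarrow> cube n x \<subseteq> cube m x"
  using cube_F_sub[of "cube m x" m n x] cube_D cube_in D_sub by blast

lemma cube_same: "m \<le> n \<Longrightarrow> x \<in> space M \<Longrightarrow> y \<in> cube n x \<Longrightarrow> cube m y = cube m x"
proof -
  assume a: "m \<le> n" "x \<in> space M" "y \<in> cube n x"
  have ys: "y \<in> space M" using a D_space cube_D by blast
  have "y \<in> cube m x" using cube_mono[OF a(1,2)] a(3) by blast
  then show ?thesis using cube_eq[OF ys cube_D[OF a(2)]] by simp
qed

lemma cube0: "x \<in> space M \<Longrightarrow> cube 0 x = space M"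
  using cube_D[of x 0] cube_in[of x 0] D_sub[of 0] F0 by auto

lemma children: "x \<in> space M \<Longrightarrow> cube (Suc n) x \<in> cube_children D n (cube n x)"
  unfolding cube_children_def using cube_D cube_mono[of n "Suc n" x] by auto

lemma cube_meas: "x \<in> space M \<Longrightarrow> \<alpha>^n \<le> measure M (cube n x)"
proof (induction n)
  case 0 then show ?case using cube0 by (simp add: prob_space)
next
  case (Suc n)
  have "\<alpha> * measure M (cube n x) \<le> measure M (cube (Suc n) x)"
    using hom children[OF Suc.prems] cube_D[OF Suc.prems] unfolding homogeneous_filtration_def by blast
  moreover have "\<alpha> * \<alpha>^n \<le> \<alpha> * measure M (cube n x)" using Suc a0 by simp
  ultimately show ?case by simp
qed

lemma cube_pos: "x \<in> space M \<Longrightarrow> 0 < measure M (cube n x)"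
  using cube_meas[of x n] a0 by (meson less_le_trans zero_less_power)

lemma D_meas: "Q \<in> D n \<Longrightarrow> Q \<noteq> {} \<Longrightarrow> \<alpha>^n \<le> measure M Q"
proof -
  assume Q: "Q \<in> D n" "Q \<noteq> {}"
  then obtain x where x: "x \<in> Q" by blast
  then have xs: "x \<in> space M" using D_space Q by blast
  show ?thesis using cube_meas[OF xs, of n] cube_eq[OF xs Q(1) x] by simp
qed

lemma D_Suc_ne: "R \<in> D (Suc n) \<Longrightarrow> R \<noteq> {}"
proof
  assume R: "R \<in> D (Suc n)" "R = {}"
  obtain x where x: "x \<in> space M" using not_empty by blast
  have "R \<in> cube_children D n (cube n x)" unfolding cube_children_def using R by simp
  then have "\<alpha> * measure M (cube n x) \<le> measure M R"
    using hom cube_D[OF x] unfolding homogeneous_filtration_def by blast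
  moreover have "0 < \<alpha> * measure M (cube n x)" using a0 cube_pos[OF x] by simp
  ultimately show False using R by simp
qed

lemma finite_disjoint_family_meas:
  assumes sub: "\<A> \<subseteq> sets M" and dis: "disjoint \<A>" and big: "\<And>A. A \<in> \<A> \<Longrightarrow> e \<le> measure M A" and e0: "0 < e"
  shows "finite \<A>"
proof (rule ccontr)
  assume inf: "infinite \<A>"
  define k where "k = nat (ceiling (2 / e))"
  obtain B where B: "finite B" "card B = k" "B \<subseteq> \<A>" using infinite_arbitrarily_large[OF inf] by blast
  have pd: "pairwise disjnt B" using dis B(3) unfolding pairwise_def disjnt_def disjoint_def by blast
  have fm: "\<And>S. S \<in> B \<Longrightarrow> S \<in> fmeasurable M" using B sub by (auto simp: fmeasurable_def less_top[symmetric])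
  have "measure M (\<Union>B) = (\<Sum>A\<in>B. measure M A)"
    using measure_Union'[OF B(1) fm pd] .
  also have "\<dots> \<ge> (\<Sum>A\<in>B. e)" using B big by (intro sum_mono) auto
  finally have "real k * e \<le> measure M (\<Union>B)" using B by simp
  moreover have "measure M (\<Union>B) \<le> 1" by simp
  moreover have "2 \<le> real k * e"
  proof -
    have "2 / e \<le> real k" unfolding k_def by linarith
    then show ?thesis using e0 by (simp add: field_simps)
  qed
  ultimately show False by simp
qed

lemma D_finite: "finite (D n)"
proof (cases n)
  case 0 then show ?thesis using D_sub[of 0] F0 by (simp add: finite_subset)
next
  case (Suc m)
  have "\<alpha>^n \<le> measure M R" if "R \<in> D n" for R using D_meas[OF that] D_Suc_ne that Suc by blast
  then show ?thesis
    using finite_disjoint_family_meas[of "D n" "\<alpha>^n"] D_sets D_disj a0 by auto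
qed

lemma children_finite: "finite (cube_children D n Q)"
  unfolding cube_children_def using D_finite by simp

lemma children_union: "Q \<in> D n \<Longrightarrow> \<Union>(cube_children D n Q) = Q"
proof
  assume Q: "Q \<in> D n"
  show "\<Union>(cube_children D n Q) \<subseteq> Q" unfolding cube_children_def by auto
  show "Q \<subseteq> \<Union>(cube_children D n Q)"
  proof
    fix x assume x: "x \<in> Q"
    then have xs: "x \<in> space M" using D_space Q by blast
    have "cube n x = Q" using cube_eq[OF xs Q x] .
    then show "x \<in> \<Union>(cube_children D n Q)" using children[OF xs] cube_in[OF xs] by blast
  qed
qed

lemma D_union: "\<Union>(D n) = space M"
  using D_space cube_D cube_in by blast


lemma sum_indicator_disjoint:
  assumes fin: "finite P" and dis: "disjoint P"
  shows "(\<Sum>Q\<in>P. indicator Q x) = (indicator (\<Union>P) x :: 'b::{comm_monoid_add,zero_neq_one})"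
proof (cases "x \<in> \<Union>P")
  case True
  then obtain Q0 where Q0: "Q0 \<in> P" "x \<in> Q0" by blast
  have "(\<Sum>Q\<in>P. indicator Q x) = indicator Q0 x + (\<Sum>Q\<in>P - {Q0}. (indicator Q x :: 'b))"
    using fin Q0 by (simp add: sum.remove)
  also have "(\<Sum>Q\<in>P - {Q0}. (indicator Q x :: 'b)) = 0"
  proof (rule sum.neutral, rule ballI)
    fix Q assume "Q \<in> P - {Q0}"
    then have "Q \<inter> Q0 = {}" using dis Q0 unfolding disjoint_def by blast
    then show "(indicator Q x :: 'b) = 0" using Q0 by (auto simp: indicator_def)
  qed
  finally show ?thesis using True Q0 by simp
next
  case False
  then show ?thesis by (auto simp: indicator_def intro!: sum.neutral)
qed

lemma nn_part:
  assumes fin: "finite P" and sub: "P \<subseteq> sets M" and dis: "disjoint P" and h: "h \<in> borel_measurable M"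
  shows "(\<integral>\<^sup>+x. h x * indicator (\<Union>P) x \<partial>M) = (\<Sum>Q\<in>P. \<integral>\<^sup>+x. h x * indicator Q x \<partial>M)"
proof -
  have eq: "h x * indicator (\<Union>P) x = (\<Sum>Q\<in>P. h x * indicator Q x)" for x
  proof -
    have "indicator (\<Union>P) x = (\<Sum>Q\<in>P. indicator Q x :: ennreal)"
      using sum_indicator_disjoint[OF fin dis, symmetric] .
    then show ?thesis by (simp add: sum_distrib_left)
  qed
  have "(\<integral>\<^sup>+x. (\<Sum>Q\<in>P. h x * indicator Q x) \<partial>M) = (\<Sum>Q\<in>P. \<integral>\<^sup>+x. h x * indicator Q x \<partial>M)"
    using sub h fin by (intro nn_integral_sum) auto
  then show ?thesis by (simp only: eq)
qed

lemma nn_const: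
  assumes R: "R \<in> sets M" and h: "\<And>x. x \<in> R \<Longrightarrow> h x = k"
  shows "(\<integral>\<^sup>+x. h x * indicator R x \<partial>M) = k * emeasure M R"
proof -
  have "(\<integral>\<^sup>+x. h x * indicator R x \<partial>M) = (\<integral>\<^sup>+x. k * indicator R x \<partial>M)"
    using h by (intro nn_integral_cong) (auto simp: indicator_def)
  also have "\<dots> = k * emeasure M R" using R by (simp add: nn_integral_cmult_indicator)
  finally show ?thesis .
qed

lemma nn_decomp:
  assumes h: "h \<in> borel_measurable M"
  shows "(\<integral>\<^sup>+x. h x \<partial>M) = (\<Sum>Q\<in>D n. \<integral>\<^sup>+x. h x * indicator Q x \<partial>M)"
proof -
  have "(\<integral>\<^sup>+x. h x \<partial>M) = (\<integral>\<^sup>+x. h x * indicator (\<Union>(D n)) x \<partial>M)"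
    by (intro nn_integral_cong) (simp add: D_union)
  also have "\<dots> = (\<Sum>Q\<in>D n. \<integral>\<^sup>+x. h x * indicator Q x \<partial>M)"
    using nn_part[OF D_finite _ D_disj h] D_sets by blast
  finally show ?thesis .
qed

lemma nn_decomp_children:
  assumes Q: "Q \<in> D n" and h: "h \<in> borel_measurable M"
  shows "(\<integral>\<^sup>+x. h x * indicator Q x \<partial>M) = (\<Sum>R\<in>cube_children D n Q. \<integral>\<^sup>+x. h x * indicator R x \<partial>M)"
proof -
  have "(\<integral>\<^sup>+x. h x * indicator Q x \<partial>M) = (\<integral>\<^sup>+x. h x * indicator (\<Union>(cube_children D n Q)) x \<partial>M)"
    using children_union[OF Q] by simp
  also have "\<dots> = (\<Sum>R\<in>cube_children D n Q. \<integral>\<^sup>+x. h x * indicator R x \<partial>M)"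
  proof (rule nn_part[OF children_finite _ _ h])
    show "cube_children D n Q \<subseteq> sets M" unfolding cube_children_def using D_sets by blast
    show "disjoint (cube_children D n Q)" using D_disj[of "Suc n"] unfolding cube_children_def disjoint_def by blast
  qed
  finally show ?thesis .
qed

lemma children_disj: "disjoint (cube_children D n Q)"
  using D_disj[of "Suc n"] unfolding cube_children_def disjoint_def by blast

lemma children_sets: "cube_children D n Q \<subseteq> sets M"
  unfolding cube_children_def using D_sets by blast

lemma measure_children: "Q \<in> D n \<Longrightarrow> measure M Q = (\<Sum>R\<in>cube_children D n Q. measure M R)"
proof -
  assume Q: "Q \<in> D n"
  have pd: "pairwise disjnt (cube_children D n Q)"
    using children_disj unfolding pairwise_def disjnt_def disjoint_def by blast
  have fm: "\<And>S. S \<in> cube_children D n Q \<Longrightarrow> S \<in> fmeasurable M"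
    using children_sets by (auto simp: fmeasurable_def less_top[symmetric])
  show ?thesis using measure_Union'[OF children_finite fm pd] children_union[OF Q] by simp
qed

lemma int_ind: "A \<in> sets M \<Longrightarrow> integrable M g \<Longrightarrow> integrable M (\<lambda>y. indicator A y * g y)"
  for g :: "'a \<Rightarrow> real"
  using integrable_real_mult_indicator[of A M g] by (simp add: mult.commute)

lemma setint_ind: "(\<integral>y\<in>A. g y \<partial>M) = (\<integral>y. indicator A y * g y \<partial>M)" for g :: "'a \<Rightarrow> real"
  unfolding set_lebesgue_integral_def by simp

lemma setint_children:
  fixes g :: "'a \<Rightarrow> real"
  assumes Q: "Q \<in> D n" and g: "integrable M g"
  shows "(\<integral>x\<in>Q. g x \<partial>M) = (\<Sum>R\<in>cube_children D n Q. (\<integral>x\<in>R. g x \<partial>M))"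
proof -
  have pw: "indicator Q x * g x = (\<Sum>R\<in>cube_children D n Q. indicator R x * g x)" for x
  proof -
    have "(\<Sum>R\<in>cube_children D n Q. indicator R x :: real) = indicator (\<Union>(cube_children D n Q)) x"
      by (rule sum_indicator_disjoint[OF children_finite children_disj])
    then have "indicator Q x = (\<Sum>R\<in>cube_children D n Q. indicator R x :: real)"
      using children_union[OF Q] by simp
    then show ?thesis by (simp add: sum_distrib_right)
  qed
  have "(\<integral>x\<in>Q. g x \<partial>M) = (\<integral>x. (\<Sum>R\<in>cube_children D n Q. indicator R x * g x) \<partial>M)"
    unfolding setint_ind pw ..
  also have "\<dots> = (\<Sum>R\<in>cube_children D n Q. (\<integral>x. indicator R x * g x \<partial>M))"
    using children_sets g by (intro Bochner_Integration.integral_sum int_ind) auto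
  also have "\<dots> = (\<Sum>R\<in>cube_children D n Q. (\<integral>x\<in>R. g x \<partial>M))"
    unfolding setint_ind ..
  finally show ?thesis .
qed

definition EN :: "nat \<Rightarrow> ('a \<Rightarrow> real) \<Rightarrow> 'a \<Rightarrow> real" where
  "EN n g x = cube_avg M (cube n x) g"

lemma EN_sum: "x \<in> space M \<Longrightarrow> EN n g x = (\<Sum>Q\<in>D n. cube_avg M Q g * indicator Q x)"
proof -
  assume x: "x \<in> space M"
  have "(\<Sum>Q\<in>D n. cube_avg M Q g * indicator Q x) = cube_avg M (cube n x) g * indicator (cube n x) x
       + (\<Sum>Q\<in>D n - {cube n x}. cube_avg M Q g * indicator Q x)"
    by (subst sum.remove[OF D_finite cube_D[OF x]]) (rule refl)
  moreover have "(\<Sum>Q\<in>D n - {cube n x}. cube_avg M Q g * indicator Q x) = 0"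
  proof (rule sum.neutral, rule ballI)
    fix Q assume "Q \<in> D n - {cube n x}"
    then have "x \<notin> Q" using cube_eq[OF x] by blast
    then show "cube_avg M Q g * indicator Q x = 0" by simp
  qed
  ultimately show ?thesis using cube_in[OF x] unfolding EN_def by simp
qed

lemma EN_meas[measurable]: "EN n g \<in> borel_measurable M"
proof -
  have "(\<lambda>x. \<Sum>Q\<in>D n. cube_avg M Q g * indicator Q x) \<in> borel_measurable M"
    using D_sets by (intro borel_measurable_sum borel_measurable_times) auto
  then show ?thesis using EN_sum by (subst measurable_cong) auto
qed

lemma EN_integrable: "integrable M (EN n g)"
proof -
  have "integrable M (\<lambda>x. cube_avg M Q g * indicator Q x)" if "Q \<in> D n" for Q
  proof -
    have "integrable M (indicator Q :: 'a \<Rightarrow> real)"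
      using D_sets[OF that] by (intro integrable_real_indicator) (auto simp: less_top[symmetric] emeasure_finite)
    then show ?thesis by (rule integrable_mult_right)
  qed
  then have "integrable M (\<lambda>x. \<Sum>Q\<in>D n. cube_avg M Q g * indicator Q x)"
    by (intro Bochner_Integration.integrable_sum) auto
  then show ?thesis using EN_sum by (subst Bochner_Integration.integrable_cong[OF refl]) auto
qed

lemma EN_eq: "x \<in> space M \<Longrightarrow> EN n g x = (\<integral>y\<in>cube n x. g y \<partial>M) / measure M (cube n x)"
  unfolding EN_def cube_avg_def using cube_pos by simp

lemma EN_local:
  assumes "\<And>y. y \<in> cube n x \<Longrightarrow> g y = h y"
  shows "EN n g x = EN n h x"
proof -
  have "(\<integral>y. indicator (cube n x) y * g y \<partial>M) = (\<integral>y. indicator (cube n x) y * h y \<partial>M)"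
  proof (rule Bochner_Integration.integral_cong[OF refl])
    fix y show "indicator (cube n x) y * g y = indicator (cube n x) y * h y"
      using assms by (cases "y \<in> cube n x") auto
  qed
  then show ?thesis unfolding EN_def cube_avg_def setint_ind by simp
qed

lemma EN_cong: "(\<And>y. y \<in> space M \<Longrightarrow> g y = h y) \<Longrightarrow> x \<in> space M \<Longrightarrow> EN n g x = EN n h x"
  by (rule EN_local) (use D_space cube_D in blast)

lemma EN_add:
  assumes g: "integrable M g" and h: "integrable M h" and x: "x \<in> space M"
  shows "EN n (\<lambda>y. g y + h y) x = EN n g x + EN n h x"
proof -
  have s: "cube n x \<in> sets M" using cube_D[OF x] D_sets by blast
  have "(\<integral>y. indicator (cube n x) y * (g y + h y) \<partial>M)
      = (\<integral>y. indicator (cube n x) y * g y + indicator (cube n x) y * h y \<partial>M)"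
    by (simp add: distrib_left)
  also have "\<dots> = (\<integral>y. indicator (cube n x) y * g y \<partial>M) + (\<integral>y. indicator (cube n x) y * h y \<partial>M)"
    by (rule Bochner_Integration.integral_add[OF int_ind[OF s g] int_ind[OF s h]])
  finally show ?thesis unfolding EN_eq[OF x] setint_ind by (simp add: add_divide_distrib)
qed

lemma EN_cmult:
  assumes x: "x \<in> space M"
  shows "EN n (\<lambda>y. c * g y) x = c * EN n g x"
  unfolding EN_eq[OF x] setint_ind by (simp add: algebra_simps)

lemma EN_const: "x \<in> space M \<Longrightarrow> EN n (\<lambda>y. c) x = c"
proof -
  assume x: "x \<in> space M"
  have s: "cube n x \<in> sets M" using cube_D[OF x] D_sets by blast
  have "(\<integral>y\<in>cube n x. c \<partial>M) = measure M (cube n x) * c"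
    using set_integral_const[OF s, of c] emeasure_finite[of "cube n x"] by simp
  moreover have "0 < measure M (cube n x)" by (rule cube_pos[OF x])
  ultimately show ?thesis unfolding EN_eq[OF x] by simp
qed

lemma EN_indicator_F:
  assumes A: "A \<in> F m" and mn: "m \<le> n" and x: "x \<in> space M"
  shows "EN n (indicator A) x = indicator A x"
proof (cases "x \<in> A")
  case True
  then have sub: "cube n x \<subseteq> A" using cube_F_sub[OF A mn x] by blast
  have "EN n (indicator A) x = EN n (\<lambda>y. 1) x"
    by (rule EN_local) (use sub in auto)
  then show ?thesis using EN_const[OF x] True by simp
next
  case False
  then have dj: "cube n x \<inter> A = {}" using cube_F_disj[OF A mn x] by blast
  have "EN n (indicator A) x = EN n (\<lambda>y. 0) x"
    by (rule EN_local) (use dj in \<open>auto simp: indicator_def\<close>)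
  then show ?thesis using EN_const[OF x] False by simp
qed


lemma EN_diff:
  assumes g: "integrable M g" and h: "integrable M h" and x: "x \<in> space M"
  shows "EN n g x - EN n h x = EN n (\<lambda>y. g y - h y) x"
proof -
  have "EN n g x = EN n (\<lambda>y. (g y - h y) + h y) x" by simp
  also have "\<dots> = EN n (\<lambda>y. g y - h y) x + EN n h x"
    using g h x by (intro EN_add) auto
  finally show ?thesis by simp
qed

lemma contraction:
  assumes g: "integrable M g"
  shows "(\<integral>\<^sup>+x. ennreal \<bar>EN n g x\<bar> \<partial>M) \<le> (\<integral>\<^sup>+x. ennreal \<bar>g x\<bar> \<partial>M)"
proof -
  have gm[measurable]: "g \<in> borel_measurable M" using g by auto
  have "(\<integral>\<^sup>+x. ennreal \<bar>EN n g x\<bar> \<partial>M) = (\<Sum>Q\<in>D n. \<integral>\<^sup>+x. ennreal \<bar>EN n g x\<bar> * indicator Q x \<partial>M)"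
    by (rule nn_decomp) measurable
  also have "\<dots> \<le> (\<Sum>Q\<in>D n. \<integral>\<^sup>+x. ennreal \<bar>g x\<bar> * indicator Q x \<partial>M)"
  proof (rule sum_mono)
    fix Q assume Q: "Q \<in> D n"
    have Qs: "Q \<in> sets M" using D_sets[OF Q] .
    show "(\<integral>\<^sup>+x. ennreal \<bar>EN n g x\<bar> * indicator Q x \<partial>M) \<le> (\<integral>\<^sup>+x. ennreal \<bar>g x\<bar> * indicator Q x \<partial>M)"
    proof (cases "Q = {}")
      case True then show ?thesis by simp
    next
      case False
      then obtain x0 where x0: "x0 \<in> Q" by blast
      have x0s: "x0 \<in> space M" using x0 D_space[OF Q] by blast
      have mpos: "0 < measure M Q" using cube_pos[OF x0s, of n] cube_eq[OF x0s Q x0] by simp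
      have "(\<integral>\<^sup>+x. ennreal \<bar>EN n g x\<bar> * indicator Q x \<partial>M) = ennreal \<bar>cube_avg M Q g\<bar> * emeasure M Q"
      proof (rule nn_const[OF Qs])
        fix x assume x: "x \<in> Q"
        then have "x \<in> space M" using D_space[OF Q] by blast
        then have "cube n x = Q" using cube_eq Q x by blast
        then show "ennreal \<bar>EN n g x\<bar> = ennreal \<bar>cube_avg M Q g\<bar>" unfolding EN_def by simp
      qed
      also have "\<dots> = ennreal (\<bar>cube_avg M Q g\<bar> * measure M Q)"
        by (simp add: emeasure_eq_measure ennreal_mult)
      also have "\<bar>cube_avg M Q g\<bar> * measure M Q = \<bar>\<integral>y. indicator Q y * g y \<partial>M\<bar>"
        unfolding cube_avg_def setint_ind using mpos by (simp add: abs_div)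
      also have "ennreal \<bar>\<integral>y. indicator Q y * g y \<partial>M\<bar> \<le> (\<integral>\<^sup>+y. norm (indicator Q y * g y) \<partial>M)"
        using integral_norm_bound_ennreal[OF int_ind[OF Qs g]] by simp
      also have "\<dots> = (\<integral>\<^sup>+x. ennreal \<bar>g x\<bar> * indicator Q x \<partial>M)"
        by (intro nn_integral_cong) (auto simp: indicator_def)
      finally show ?thesis .
    qed
  qed
  also have "\<dots> = (\<integral>\<^sup>+x. ennreal \<bar>g x\<bar> \<partial>M)"
    by (rule nn_decomp[symmetric]) measurable
  finally show ?thesis .
qed

definition L :: "nat \<Rightarrow> ('a \<Rightarrow> real) \<Rightarrow> ennreal" where
  "L n g = (\<integral>\<^sup>+x. ennreal \<bar>EN n g x - g x\<bar> \<partial>M)"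

lemma L_tri:
  assumes g: "integrable M g" and h: "integrable M h"
  shows "L n g \<le> L n h + 2 * (\<integral>\<^sup>+x. ennreal \<bar>g x - h x\<bar> \<partial>M)"
proof -
  have [measurable]: "g \<in> borel_measurable M" "h \<in> borel_measurable M" using g h by auto
  have gh: "integrable M (\<lambda>y. g y - h y)" using g h by auto
  have "L n g \<le> (\<integral>\<^sup>+x. ennreal \<bar>EN n h x - h x\<bar> + ennreal \<bar>EN n (\<lambda>y. g y - h y) x\<bar> + ennreal \<bar>g x - h x\<bar> \<partial>M)"
    unfolding L_def
  proof (rule nn_integral_mono)
    fix x assume x: "x \<in> space M"
    have "\<bar>EN n g x - g x\<bar> \<le> \<bar>EN n h x - h x\<bar> + \<bar>EN n g x - EN n h x\<bar> + \<bar>g x - h x\<bar>" by simp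
    then have "\<bar>EN n g x - g x\<bar> \<le> \<bar>EN n h x - h x\<bar> + \<bar>EN n (\<lambda>y. g y - h y) x\<bar> + \<bar>g x - h x\<bar>"
      using EN_diff[OF g h x] by simp
    then show "ennreal \<bar>EN n g x - g x\<bar> \<le> ennreal \<bar>EN n h x - h x\<bar> + ennreal \<bar>EN n (\<lambda>y. g y - h y) x\<bar> + ennreal \<bar>g x - h x\<bar>"
      by (simp add: ennreal_plus[symmetric] del: ennreal_plus)
  qed
  also have "\<dots> = L n h + (\<integral>\<^sup>+x. ennreal \<bar>EN n (\<lambda>y. g y - h y) x\<bar> \<partial>M) + (\<integral>\<^sup>+x. ennreal \<bar>g x - h x\<bar> \<partial>M)"
    unfolding L_def by (simp add: nn_integral_add)
  also have "\<dots> \<le> L n h + (\<integral>\<^sup>+x. ennreal \<bar>g x - h x\<bar> \<partial>M) + (\<integral>\<^sup>+x. ennreal \<bar>g x - h x\<bar> \<partial>M)"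
    using contraction[OF gh, of n] by (intro add_mono) auto
  finally show ?thesis by (simp add: mult_2 add.assoc)
qed

lemma L_cong:
  assumes gh: "\<And>y. y \<in> space M \<Longrightarrow> g y = h y"
  shows "L n g = L n h"
  unfolding L_def
proof (rule nn_integral_cong)
  fix x assume x: "x \<in> space M"
  have "EN n g x = EN n h x" using EN_cong[OF gh x] .
  then show "ennreal \<bar>EN n g x - g x\<bar> = ennreal \<bar>EN n h x - h x\<bar>" using gh[OF x] by simp
qed

lemma L_add:
  assumes g: "integrable M g" and h: "integrable M h"
  shows "L n (\<lambda>y. g y + h y) \<le> L n g + L n h"
proof -
  have [measurable]: "g \<in> borel_measurable M" "h \<in> borel_measurable M" using g h by auto
  have "L n (\<lambda>y. g y + h y) \<le> (\<integral>\<^sup>+x. ennreal \<bar>EN n g x - g x\<bar> + ennreal \<bar>EN n h x - h x\<bar> \<partial>M)"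
    unfolding L_def
  proof (rule nn_integral_mono)
    fix x assume x: "x \<in> space M"
    have "\<bar>EN n (\<lambda>y. g y + h y) x - (g x + h x)\<bar> \<le> \<bar>EN n g x - g x\<bar> + \<bar>EN n h x - h x\<bar>"
      using EN_add[OF g h x] by simp
    then show "ennreal \<bar>EN n (\<lambda>y. g y + h y) x - (g x + h x)\<bar> \<le> ennreal \<bar>EN n g x - g x\<bar> + ennreal \<bar>EN n h x - h x\<bar>"
      by (simp add: ennreal_plus[symmetric] del: ennreal_plus)
  qed
  also have "\<dots> = L n g + L n h" unfolding L_def by (simp add: nn_integral_add)
  finally show ?thesis .
qed

lemma L_cmult: "integrable M g \<Longrightarrow> L n (\<lambda>y. c * g y) = ennreal \<bar>c\<bar> * L n g"
proof -
  assume "integrable M g"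
  then have [measurable]: "g \<in> borel_measurable M" by auto
  have "L n (\<lambda>y. c * g y) = (\<integral>\<^sup>+x. ennreal \<bar>c\<bar> * ennreal \<bar>EN n g x - g x\<bar> \<partial>M)"
    unfolding L_def
  proof (intro nn_integral_cong)
    fix x assume x: "x \<in> space M"
    show "ennreal \<bar>EN n (\<lambda>y. c * g y) x - c * g x\<bar> = ennreal \<bar>c\<bar> * ennreal \<bar>EN n g x - g x\<bar>"
      using EN_cmult[OF x] by (simp add: ennreal_mult[symmetric] abs_mult[symmetric] right_diff_distrib)
  qed
  also have "\<dots> = ennreal \<bar>c\<bar> * L n g" unfolding L_def
    by (rule nn_integral_cmult) measurable
  finally show ?thesis .
qed


definition Pconv :: "('a \<Rightarrow> real) \<Rightarrow> bool" where
  "Pconv g \<longleftrightarrow> (\<lambda>n. L n g) \<longlonglongrightarrow> 0"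

lemma ind_int: "A \<in> sets M \<Longrightarrow> integrable M (indicator A :: 'a \<Rightarrow> real)"
  by (intro integrable_real_indicator) (auto simp: less_top[symmetric] emeasure_finite)

lemma P_approx:
  assumes g: "integrable M g"
    and ap: "\<And>e. 0 < e \<Longrightarrow> \<exists>h. integrable M h \<and> Pconv h \<and> (\<integral>\<^sup>+x. ennreal \<bar>g x - h x\<bar> \<partial>M) < ennreal e"
  shows "Pconv g"
  unfolding Pconv_def
proof (rule order_tendstoI)
  fix a :: ennreal assume "a < 0" then show "eventually (\<lambda>n. a < L n g) sequentially" by simp
next
  fix u :: ennreal assume u: "0 < u"
  obtain z where z: "0 < z" "z < u" using dense[OF u] by blast
  define r where "r = enn2real z"
  have zt: "z < top" using z(2) top_greatest[of u] by (rule order.strict_trans2)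
  have zr: "z = ennreal r" unfolding r_def using zt by simp
  have r0: "0 < r" using z zr by simp
  define e where "e = r/4"
  have e0: "0 < e" unfolding e_def using r0 by simp
  obtain h where h: "integrable M h" "Pconv h" "(\<integral>\<^sup>+x. ennreal \<bar>g x - h x\<bar> \<partial>M) < ennreal e"
    using ap[OF e0] by blast
  have "eventually (\<lambda>n. L n h < ennreal e) sequentially"
  proof -
    have "(\<lambda>n. L n h) \<longlonglongrightarrow> 0" using h(2) unfolding Pconv_def .
    moreover have "(0::ennreal) < ennreal e" using e0 by simp
    ultimately show ?thesis by (rule order_tendstoD(2))
  qed
  then show "eventually (\<lambda>n. L n g < u) sequentially"
  proof (rule eventually_mono)
    fix n assume Ln: "L n h < ennreal e"
    have "L n g \<le> L n h + 2 * (\<integral>\<^sup>+x. ennreal \<bar>g x - h x\<bar> \<partial>M)" by (rule L_tri[OF g h(1)])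
    also have "\<dots> \<le> ennreal e + 2 * ennreal e"
      using Ln h(3) by (intro add_mono mult_left_mono) auto
    also have "\<dots> = ennreal (3 * e)"
    proof -
      have "ennreal (3*e) = ennreal (e + 2*e)" by simp
      also have "\<dots> = ennreal e + ennreal (2*e)" using e0 by (intro ennreal_plus) auto
      also have "ennreal (2*e) = ennreal 2 * ennreal e" using e0 by (intro ennreal_mult) auto
      finally show ?thesis by simp
    qed
    also have "\<dots> < ennreal r" using r0 unfolding e_def by (simp add: ennreal_less_iff)
    also have "\<dots> < u" using z zr by simp
    finally show "L n g < u" .
  qed
qed

lemma P_add:
  assumes "Pconv g" "Pconv h" "integrable M g" "integrable M h"
  shows "Pconv (\<lambda>y. g y + h y)"
  unfolding Pconv_def
proof (rule tendsto_sandwich[where f="\<lambda>n. 0" and h="\<lambda>n. L n g + L n h"])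
  show "eventually (\<lambda>n. 0 \<le> L n (\<lambda>y. g y + h y)) sequentially" by simp
  show "eventually (\<lambda>n. L n (\<lambda>y. g y + h y) \<le> L n g + L n h) sequentially"
    using L_add assms by simp
  show "(\<lambda>n. 0::ennreal) \<longlonglongrightarrow> 0" by simp
  show "(\<lambda>n. L n g + L n h) \<longlonglongrightarrow> 0"
    using tendsto_add[of "\<lambda>n. L n g" 0 sequentially "\<lambda>n. L n h" 0] assms unfolding Pconv_def by simp
qed

lemma P_cmult:
  assumes "integrable M g" "Pconv g"
  shows "Pconv (\<lambda>y. c * g y)"
proof -
  have "(\<lambda>n. ennreal \<bar>c\<bar> * L n g) \<longlonglongrightarrow> ennreal \<bar>c\<bar> * 0"
    using assms(2) unfolding Pconv_def by (intro ennreal_tendsto_cmult) auto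
  then show ?thesis unfolding Pconv_def using L_cmult[OF assms(1)] by simp
qed

lemma P_cong: "(\<And>y. y \<in> space M \<Longrightarrow> g y = h y) \<Longrightarrow> Pconv g \<longleftrightarrow> Pconv h"
  unfolding Pconv_def using L_cong by (metis (no_types, lifting) ext)

lemma P_F:
  assumes A: "A \<in> F m"
  shows "Pconv (indicator A)"
  unfolding Pconv_def
proof (rule tendsto_eventually)
  show "eventually (\<lambda>n. L n (indicator A) = 0) sequentially"
    unfolding eventually_sequentially
  proof (intro exI allI impI)
    fix n assume mn: "m \<le> n"
    show "L n (indicator A) = 0" unfolding L_def
      using EN_indicator_F[OF A mn] by (subst nn_integral_cong[where v="\<lambda>x. 0"]) auto
  qed
qed


lemma Int_stable_F: "Int_stable (\<Union>n. F n)"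
  unfolding Int_stable_def
proof (intro ballI)
  fix a b assume a: "a \<in> (\<Union>n. F n)" and b: "b \<in> (\<Union>n. F n)"
  then obtain m k where m: "a \<in> F m" and k: "b \<in> F k" by blast
  interpret S: sigma_algebra "space M" "F (max m k)" by (rule F_sa)
  have "a \<in> F (max m k)" using m F_mono[of m "max m k"] by auto
  moreover have "b \<in> F (max m k)" using k F_mono[of k "max m k"] by auto
  ultimately
  show "a \<inter> b \<in> (\<Union>n. F n)" using S.Int by blast
qed

lemma F_Pow: "(\<Union>n. F n) \<subseteq> Pow (space M)"
  using F_sets sets.space_closed by blast

lemma P_sets:
  assumes A: "A \<in> sets M"
  shows "Pconv (indicator A)"
proof -
  have A': "A \<in> sigma_sets (space M) (\<Union>n. F n)" using A sets_eq by simp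
  from Int_stable_F F_Pow A' show ?thesis
  proof (induction rule: sigma_sets_induct_disjoint)
    case (basic A) then show ?case using P_F by blast
  next
    case empty
    have "{} \<in> F 0" using F0 by simp
    then show ?case by (rule P_F)
  next
    case (compl A)
    have As: "A \<in> sets M" using compl.hyps sets_eq by simp
    have one: "Pconv (\<lambda>y. 1)"
    proof -
      have "Pconv (indicator (space M))" using space_F[of 0] by (rule P_F)
      then show ?thesis by (subst P_cong[where h="indicator (space M)"]) auto
    qed
    have "Pconv (\<lambda>y. (-1) * indicator A y)" using ind_int[OF As] compl.IH by (rule P_cmult)
    then have "Pconv (\<lambda>y. 1 + (-1) * indicator A y)"
      using one ind_int[OF As] by (intro P_add) auto
    then show ?case by (subst P_cong[where h="\<lambda>y. 1 + (-1) * indicator A y"]) (auto simp: indicator_def)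
  next
    case (union A)
    have As: "\<And>i. A i \<in> sets M" using union.hyps(2) sets_eq by auto
    define V where "V = (\<lambda>K. \<Union>i\<in>{..<K}. A i)"
    have Vs: "V K \<in> sets M" for K unfolding V_def using As by auto
    have PV: "Pconv (indicator (V K))" for K
    proof (induction K)
      case 0
      have "{} \<in> F 0" using F0 by simp
      moreover have e: "indicator (V 0) = (indicator {} :: 'a \<Rightarrow> real)" unfolding V_def by simp
      ultimately show ?case unfolding e by (intro P_F)
    next
      case (Suc K)
      have "Pconv (\<lambda>y. indicator (V K) y + indicator (A K) y)"
        using Suc union.IH[of K] ind_int[OF Vs[of K]] ind_int[OF As[of K]] by (intro P_add) auto
      moreover have "indicator (V (Suc K)) y = indicator (V K) y + (indicator (A K) y :: real)" for y
      proof -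
        have "y \<notin> V K" if "y \<in> A K"
        proof
          assume "y \<in> V K"
          then obtain i where i: "i < K" "y \<in> A i" unfolding V_def by auto
          then have "A i \<inter> A K = {}" using union.hyps(1) unfolding disjoint_family_on_def by auto
          then show False using i that by blast
        qed
        then show ?thesis unfolding V_def by (auto simp: indicator_def lessThan_Suc)
      qed
      ultimately show ?case by simp
    qed
    define U where "U = (\<Union>i. A i)"
    have Us: "U \<in> sets M" unfolding U_def using As by auto
    have VU: "V K \<subseteq> U" for K unfolding V_def U_def by auto
    have lim: "(\<lambda>K. measure M (V K)) \<longlonglongrightarrow> measure M U"
    proof -
      have "incseq V" unfolding V_def incseq_def by (auto simp: subset_eq)
      moreover have "(\<Union>K. V K) = U" unfolding V_def U_def by (auto intro: lessThan_iff[THEN iffD2, OF lessI])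
      ultimately show ?thesis using finite_Lim_measure_incseq[of V] Vs by auto
    qed
    show ?case unfolding U_def[symmetric]
    proof (rule P_approx[OF ind_int[OF Us]])
      fix e :: real assume e0: "0 < e"
      obtain K where K: "measure M U - e < measure M (V K)"
        using order_tendstoD(1)[OF lim, of "measure M U - e"] e0 eventually_sequentially by auto
      have "(\<integral>\<^sup>+x. ennreal \<bar>indicator U x - indicator (V K) x\<bar> \<partial>M) = (\<integral>\<^sup>+x. indicator (U - V K) x \<partial>M)"
        using VU[of K] by (intro nn_integral_cong) (auto simp: indicator_def)
      also have "\<dots> = emeasure M (U - V K)" using Us Vs by simp
      also have "\<dots> = ennreal (measure M U - measure M (V K))"
        using Us Vs VU[of K] by (simp add: emeasure_eq_measure measure_Diff)
      also have "\<dots> < ennreal e" using K e0 by (simp add: ennreal_lessI)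
      finally show "\<exists>h. integrable M h \<and> Pconv h \<and> (\<integral>\<^sup>+x. ennreal \<bar>indicator U x - h x\<bar> \<partial>M) < ennreal e"
        using ind_int[OF Vs[of K]] PV[of K] by blast
    qed
  qed
qed


lemma P_all:
  assumes "integrable M g"
  shows "Pconv g"
  using assms
proof (induction rule: integrable_induct)
  case (base A c)
  have "Pconv (\<lambda>y. c * indicator A y)" using ind_int[OF base(1)] P_sets[OF base(1)] by (rule P_cmult)
  then show ?case by (subst P_cong[where h="\<lambda>y. c * indicator A y"]) auto
next
  case (add f g)
  then show ?case by (intro P_add) auto
next
  case (lim f s)
  have [measurable]: "f \<in> borel_measurable M" using lim(4) by auto
  have sm[measurable]: "\<And>i. s i \<in> borel_measurable M" using lim(1) by auto
  have conv: "(\<lambda>i. (\<integral>\<^sup>+x. norm (f x - s i x) \<partial>M)) \<longlonglongrightarrow> 0"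
  proof (rule nn_integral_dominated_convergence_norm[where w="\<lambda>x. 2 * norm (f x)"])
    show "\<And>j. AE x in M. norm (s j x) \<le> 2 * norm (f x)" using lim(3) by auto
    have "(\<integral>\<^sup>+x. ennreal (2 * norm (f x)) \<partial>M) = 2 * (\<integral>\<^sup>+x. ennreal (norm (f x)) \<partial>M)"
      by (subst nn_integral_cmult[symmetric]) (auto simp: ennreal_mult)
    also have "\<dots> < \<infinity>" using lim(4) unfolding integrable_iff_bounded by (simp add: ennreal_mult_less_top)
    finally show "(\<integral>\<^sup>+x. ennreal (2 * norm (f x)) \<partial>M) < \<infinity>" .
    show "AE x in M. (\<lambda>i. s i x) \<longlonglongrightarrow> f x" using lim(2) by auto
  qed measurable
  show ?case
  proof (rule P_approx[OF lim(4)])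
    fix e :: real assume e0: "0 < e"
    have "eventually (\<lambda>i. (\<integral>\<^sup>+x. norm (f x - s i x) \<partial>M) < ennreal e) sequentially"
      using conv e0 by (intro order_tendstoD(2)) auto
    then obtain i where i: "(\<integral>\<^sup>+x. norm (f x - s i x) \<partial>M) < ennreal e"
      by (auto simp: eventually_sequentially)
    then show "\<exists>h. integrable M h \<and> Pconv h \<and> (\<integral>\<^sup>+x. ennreal \<bar>f x - h x\<bar> \<partial>M) < ennreal e"
      using lim(1,5) by auto
  qed
qed

lemma L1_conv:
  assumes g: "integrable M g"
  shows "(\<lambda>n. (\<integral>x. norm (EN n g x - g x) \<partial>M)) \<longlonglongrightarrow> 0"
proof -
  have int: "integrable M (\<lambda>x. EN n g x - g x)" for n using EN_integrable g by auto
  have eq: "ennreal (\<integral>x. norm (EN n g x - g x) \<partial>M) = L n g" for n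
    unfolding L_def using int[of n] by (subst nn_integral_eq_integral) auto
  have "(\<lambda>n. ennreal (\<integral>x. norm (EN n g x - g x) \<partial>M)) \<longlonglongrightarrow> 0"
    unfolding eq using P_all[OF g] unfolding Pconv_def .
  then show ?thesis by (subst ennreal_tendsto_0_iff[symmetric]) auto
qed


lemma EN_on: "Q \<in> D N \<Longrightarrow> x \<in> Q \<Longrightarrow> EN N g x = cube_avg M Q g"
  unfolding EN_def using cube_eq D_space by blast

lemma EN_same: "Q \<in> D N \<Longrightarrow> x \<in> Q \<Longrightarrow> x0 \<in> Q \<Longrightarrow> n \<le> N \<Longrightarrow> EN n g x = EN n g x0"
proof -
  assume a: "Q \<in> D N" "x \<in> Q" "x0 \<in> Q" "n \<le> N"
  have x0s: "x0 \<in> space M" using a D_space by blast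
  have "cube N x0 = Q" using cube_eq[OF x0s a(1,3)] .
  then have "cube n x = cube n x0" using cube_same[OF a(4) x0s] a(2) by simp
  then show ?thesis unfolding EN_def by simp
qed

definition Gs :: "('a \<Rightarrow> real) \<Rightarrow> nat \<Rightarrow> 'a \<Rightarrow> real" where
  "Gs g N x = exp (EN N g x - EN 0 g x - (1/(4*\<alpha>)) * (\<Sum>n<N. (EN (Suc n) g x - EN n g x)^2))"

lemma Gs_meas[measurable]: "Gs g N \<in> borel_measurable M"
  unfolding Gs_def by measurable

lemma Gs_Suc: "Gs g (Suc N) x = Gs g N x * exp ((EN (Suc N) g x - EN N g x) - (1/(4*\<alpha>)) * (EN (Suc N) g x - EN N g x)^2)"
proof -
  have "EN (Suc N) g x - EN 0 g x - (1/(4*\<alpha>)) * (\<Sum>n<Suc N. (EN (Suc n) g x - EN n g x)^2)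
      = (EN N g x - EN 0 g x - (1/(4*\<alpha>)) * (\<Sum>n<N. (EN (Suc n) g x - EN n g x)^2))
        + ((EN (Suc N) g x - EN N g x) - (1/(4*\<alpha>)) * (EN (Suc N) g x - EN N g x)^2)"
    by (simp add: algebra_simps)
  then show ?thesis by (simp only: Gs_def exp_add)
qed

lemma Gs_const: "Q \<in> D N \<Longrightarrow> x \<in> Q \<Longrightarrow> x0 \<in> Q \<Longrightarrow> Gs g N x = Gs g N x0"
proof -
  assume a: "Q \<in> D N" "x \<in> Q" "x0 \<in> Q"
  have "EN n g x = EN n g x0" if "n \<le> N" for n using EN_same[OF a that] .
  moreover have "(\<Sum>n<N. (EN (Suc n) g x - EN n g x)^2) = (\<Sum>n<N. (EN (Suc n) g x0 - EN n g x0)^2)"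
    using EN_same[OF a] by (intro sum.cong) auto
  ultimately show ?thesis unfolding Gs_def by simp
qed

lemma super_step:
  assumes f: "integrable M f"
  shows "(\<integral>\<^sup>+x. ennreal (Gs f (Suc N) x) \<partial>M) \<le> (\<integral>\<^sup>+x. ennreal (Gs f N x) \<partial>M)"
proof -
  have "(\<integral>\<^sup>+x. ennreal (Gs f (Suc N) x) \<partial>M) = (\<Sum>Q\<in>D N. \<integral>\<^sup>+x. ennreal (Gs f (Suc N) x) * indicator Q x \<partial>M)"
    by (rule nn_decomp) measurable
  also have "\<dots> \<le> (\<Sum>Q\<in>D N. \<integral>\<^sup>+x. ennreal (Gs f N x) * indicator Q x \<partial>M)"
  proof (rule sum_mono)
    fix Q assume Q: "Q \<in> D N"
    have Qs: "Q \<in> sets M" using D_sets[OF Q] .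
    show "(\<integral>\<^sup>+x. ennreal (Gs f (Suc N) x) * indicator Q x \<partial>M) \<le> (\<integral>\<^sup>+x. ennreal (Gs f N x) * indicator Q x \<partial>M)"
    proof (cases "Q = {}")
      case True then show ?thesis by simp
    next
      case False
      then obtain x0 where x0: "x0 \<in> Q" by blast
      have x0s: "x0 \<in> space M" using x0 D_space[OF Q] by blast
      define \<gamma> where "\<gamma> = Gs f N x0"
      have \<gamma>0: "0 \<le> \<gamma>" unfolding \<gamma>_def Gs_def by simp
      define mQ where "mQ = measure M Q"
      have mQ: "0 < mQ" unfolding mQ_def using cube_pos[OF x0s, of N] cube_eq[OF x0s Q x0] by simp
      define aQ where "aQ = cube_avg M Q f"
      define ch where "ch = cube_children D N Q"
      define \<delta> where "\<delta> = (\<lambda>R. cube_avg M R f - aQ)"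
      define e where "e = (\<lambda>R. exp (\<delta> R - (1/(4*\<alpha>)) * (\<delta> R)^2))"
      have rhs: "(\<integral>\<^sup>+x. ennreal (Gs f N x) * indicator Q x \<partial>M) = ennreal \<gamma> * emeasure M Q"
        using Gs_const[OF Q _ x0] unfolding \<gamma>_def by (intro nn_const[OF Qs]) auto
      have chR: "R \<in> D (Suc N)" "R \<subseteq> Q" "R \<noteq> {}" if "R \<in> ch" for R
        using that D_Suc_ne unfolding ch_def cube_children_def by auto
      have lhsR: "(\<integral>\<^sup>+x. ennreal (Gs f (Suc N) x) * indicator R x \<partial>M) = ennreal (\<gamma> * e R) * emeasure M R"
        if R: "R \<in> ch" for R
      proof (rule nn_const)
        show "R \<in> sets M" using chR[OF R] D_sets by blast
        fix x assume x: "x \<in> R"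
        have xQ: "x \<in> Q" using chR(2)[OF R] x by blast
        have "EN (Suc N) f x = cube_avg M R f" using EN_on[OF chR(1)[OF R] x] .
        moreover have "EN N f x = aQ" unfolding aQ_def using EN_on[OF Q xQ] .
        moreover have "Gs f N x = \<gamma>" unfolding \<gamma>_def using Gs_const[OF Q xQ x0] .
        ultimately show "ennreal (Gs f (Suc N) x) = ennreal (\<gamma> * e R)"
          unfolding Gs_Suc e_def \<delta>_def by simp
      qed
      have lhs: "(\<integral>\<^sup>+x. ennreal (Gs f (Suc N) x) * indicator Q x \<partial>M) = ennreal (\<gamma> * (\<Sum>R\<in>ch. e R * measure M R))"
      proof -
        have "(\<integral>\<^sup>+x. ennreal (Gs f (Suc N) x) * indicator Q x \<partial>M) = (\<Sum>R\<in>ch. \<integral>\<^sup>+x. ennreal (Gs f (Suc N) x) * indicator R x \<partial>M)"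
          unfolding ch_def by (rule nn_decomp_children[OF Q]) measurable
        also have "\<dots> = (\<Sum>R\<in>ch. ennreal (\<gamma> * e R * measure M R))"
          using lhsR \<gamma>0 by (intro sum.cong refl) (simp add: emeasure_eq_measure ennreal_mult[symmetric] e_def)
        also have "\<dots> = ennreal (\<Sum>R\<in>ch. \<gamma> * e R * measure M R)"
          using \<gamma>0 by (intro sum_ennreal) (simp add: e_def)
        finally show ?thesis by (simp add: sum_distrib_left mult.assoc)
      qed
      have key: "(\<Sum>R\<in>ch. (measure M R / mQ) * e R) \<le> 1"
        unfolding e_def
      proof (rule key_lemma[OF _ _ _ _ a0 ah])
        show "finite ch" unfolding ch_def by (rule children_finite)
        show "\<alpha> \<le> measure M R / mQ" if "R \<in> ch" for R
        proof -
          have "\<alpha> * measure M Q \<le> measure M R"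
            using hom Q that unfolding ch_def homogeneous_filtration_def by blast
          then show ?thesis using mQ unfolding mQ_def by (simp add: le_divide_eq)
        qed
        show "(\<Sum>R\<in>ch. measure M R / mQ) = 1"
          using measure_children[OF Q] mQ unfolding ch_def mQ_def by (simp add: sum_divide_distrib[symmetric])
        have avgR: "measure M R * cube_avg M R f = (\<integral>x\<in>R. f x \<partial>M)" if R: "R \<in> ch" for R
        proof -
          obtain y where y: "y \<in> R" using chR(3)[OF R] by blast
          have ys: "y \<in> space M" using y chR(1)[OF R] D_space by blast
          have "0 < measure M R" using cube_pos[OF ys, of "Suc N"] cube_eq[OF ys chR(1)[OF R] y] by simp
          then show ?thesis unfolding cube_avg_def by simp
        qed
        have "(\<Sum>R\<in>ch. measure M R / mQ * \<delta> R) = (\<Sum>R\<in>ch. (measure M R * cube_avg M R f - aQ * measure M R) / mQ)"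
          using mQ by (intro sum.cong refl) (simp add: \<delta>_def field_simps)
        also have "\<dots> = (\<Sum>R\<in>ch. (measure M R * cube_avg M R f - aQ * measure M R)) / mQ"
          by (simp add: sum_divide_distrib)
        also have "\<dots> = ((\<Sum>R\<in>ch. measure M R * cube_avg M R f) - aQ * (\<Sum>R\<in>ch. measure M R)) / mQ"
          by (simp add: sum_subtractf sum_distrib_left)
        also have "(\<Sum>R\<in>ch. measure M R * cube_avg M R f) = (\<integral>x\<in>Q. f x \<partial>M)"
          using avgR setint_children[OF Q f] unfolding ch_def by simp
        also have "(\<Sum>R\<in>ch. measure M R) = mQ" using measure_children[OF Q] unfolding ch_def mQ_def by simp
        also have "aQ * mQ = (\<integral>x\<in>Q. f x \<partial>M)" unfolding aQ_def cube_avg_def mQ_def using mQ unfolding mQ_def by simp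
        finally show "(\<Sum>R\<in>ch. measure M R / mQ * \<delta> R) = 0" by simp
      qed
      have "(\<Sum>R\<in>ch. e R * measure M R) \<le> mQ"
      proof -
        have "(\<Sum>R\<in>ch. e R * measure M R) = mQ * (\<Sum>R\<in>ch. (measure M R / mQ) * e R)"
          using mQ by (simp add: sum_distrib_left mult.commute)
        also have "\<dots> \<le> mQ * 1" using key mQ by (intro mult_left_mono) auto
        finally show ?thesis by simp
      qed
      then have "\<gamma> * (\<Sum>R\<in>ch. e R * measure M R) \<le> \<gamma> * mQ" using \<gamma>0 by (rule mult_left_mono)
      then have "ennreal (\<gamma> * (\<Sum>R\<in>ch. e R * measure M R)) \<le> ennreal \<gamma> * emeasure M Q"
        using \<gamma>0 mQ by (simp add: emeasure_eq_measure ennreal_mult[symmetric] mQ_def)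
      then show ?thesis using lhs rhs by simp
    qed
  qed
  also have "\<dots> = (\<integral>\<^sup>+x. ennreal (Gs f N x) \<partial>M)"
    by (rule nn_decomp[symmetric]) measurable
  finally show ?thesis .
qed

lemma super:
  assumes f: "integrable M f"
  shows "(\<integral>\<^sup>+x. ennreal (Gs f N x) \<partial>M) \<le> 1"
proof (induction N)
  case 0
  have "(\<integral>\<^sup>+x. ennreal (Gs f 0 x) \<partial>M) = (\<integral>\<^sup>+x. 1 \<partial>M)" unfolding Gs_def by simp
  also have "\<dots> = 1" using emeasure_space_1 by simp
  finally show ?case by simp
next
  case (Suc N) then show ?case using super_step[OF f, of N] by simp
qed


lemma delta_eq:
  assumes x: "x \<in> space M"
  shows "cube_Delta M D n (cube n x) g x = EN (Suc n) g x - EN n g x"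
proof -
  define R0 where "R0 = cube (Suc n) x"
  have R0ch: "R0 \<in> cube_children D n (cube n x)" unfolding R0_def by (rule children[OF x])
  have "(\<Sum>\<^sub>\<infinity>R\<in>cube_children D n (cube n x). cube_E M R g x) = (\<Sum>\<^sub>\<infinity>R\<in>{R0}. cube_E M R g x)"
  proof (rule infsum_cong_neutral)
    fix R assume "R \<in> {R0} - cube_children D n (cube n x)"
    then show "cube_E M R g x = 0" using R0ch by simp
  next
    fix R assume R: "R \<in> cube_children D n (cube n x) - {R0}"
    then have "R \<in> D (Suc n)" "R \<noteq> R0" unfolding cube_children_def by auto
    then have "x \<notin> R" using cube_eq[OF x] unfolding R0_def by blast
    then show "cube_E M R g x = 0" unfolding cube_E_def by simp
  qed simp
  also have "\<dots> = cube_E M R0 g x" by simp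
  also have "\<dots> = EN (Suc n) g x" unfolding cube_E_def EN_def R0_def using cube_in[OF x] by simp
  finally show ?thesis unfolding cube_Delta_def cube_E_def EN_def using cube_in[OF x] by simp
qed

lemma sq_lower:
  assumes x: "x \<in> space M"
  shows "(\<Sum>n<N. ennreal ((EN (Suc n) g x - EN n g x)^2)) \<le> square_fun_sq M D g x"
proof -
  define K where "K = (\<lambda>n. (n, cube n x)) ` {..<N}"
  define h where "h = (\<lambda>(n, Q). ennreal ((cube_Delta M D n Q g x)\<^sup>2))"
  have KS: "K \<subseteq> Sigma UNIV D" unfolding K_def using cube_D[OF x] by auto
  have "(\<Sum>n<N. ennreal ((EN (Suc n) g x - EN n g x)^2)) = (\<Sum>n<N. h (n, cube n x))"
    unfolding h_def using delta_eq[OF x] by simp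
  also have "\<dots> = sum h K" unfolding K_def by (subst sum.reindex) (auto simp: inj_on_def)
  also have "\<dots> = infsum h K" unfolding K_def by simp
  also have "\<dots> \<le> infsum h (Sigma UNIV D)"
    using KS by (intro infsum_mono_neutral nonneg_summable_on_complete) auto
  finally show ?thesis unfolding square_fun_sq_def h_def .
qed

lemma sq_bound:
  assumes fin: "esssup M (square_fun M D g) < \<top>"
  shows "AE x in M. (\<Sum>n<N. (EN (Suc n) g x - EN n g x)^2) \<le> (enn2real (esssup M (square_fun M D g)))^2"
  using esssup_AE[of "square_fun M D g" M]
proof (rule AE_mp, intro AE_I2 impI)
  fix x assume x: "x \<in> space M" and le: "square_fun M D g x \<le> esssup M (square_fun M D g)"
  define S where "S = esssup M (square_fun M D g)"
  define s where "s = enn2real S"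
  define q where "q = square_fun_sq M D g x"
  have St: "S \<noteq> \<top>" using fin unfolding S_def by simp
  have s0: "0 \<le> s" unfolding s_def by simp
  have Ss: "S = ennreal s" unfolding s_def using St by (simp add: ennreal_enn2real_if)
  have qt: "q \<noteq> \<top>"
  proof
    assume "q = \<top>"
    then have "square_fun M D g x = \<top>" unfolding square_fun_def q_def by simp
    with le St show False unfolding S_def by (simp add: top_unique)
  qed
  have "ennreal (sqrt (enn2real q)) \<le> ennreal s"
    using le qt unfolding square_fun_def q_def[symmetric] S_def[symmetric] Ss by simp
  then have "sqrt (enn2real q) \<le> s" using s0 by (simp add: ennreal_le_iff)
  then have qs: "enn2real q \<le> s^2"
    by (metis enn2real_nonneg real_sqrt_le_iff real_sqrt_unique s0 sqrt_le_D)
  have "ennreal (\<Sum>n<N. (EN (Suc n) g x - EN n g x)^2) = (\<Sum>n<N. ennreal ((EN (Suc n) g x - EN n g x)^2))"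
    by (rule sum_ennreal[symmetric]) simp
  also have "\<dots> \<le> q" unfolding q_def by (rule sq_lower[OF x])
  also have "\<dots> = ennreal (enn2real q)" using qt by (simp add: ennreal_enn2real_if)
  finally have "(\<Sum>n<N. (EN (Suc n) g x - EN n g x)^2) \<le> enn2real q"
    by (simp add: ennreal_le_iff)
  with qs show "(\<Sum>n<N. (EN (Suc n) g x - EN n g x)^2) \<le> (enn2real (esssup M (square_fun M D g)))^2"
    unfolding s_def S_def by simp
qed


lemma main_loc:
  assumes f: "integrable M f" and fin: "esssup M (square_fun M D f) < \<top>"
  shows "(\<integral>\<^sup>+x. ennreal (exp (f x - (\<integral>y. f y \<partial>M))) \<partial>M)
           \<le> ennreal (exp ((enn2real (esssup M (square_fun M D f)))\<^sup>2 / (4 * \<alpha>)))"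
proof -
  define E where "E = (\<integral>y. f y \<partial>M)"
  define s where "s = enn2real (esssup M (square_fun M D f))"
  define B where "B = exp (s^2/(4*\<alpha>))"
  have fm[measurable]: "f \<in> borel_measurable M" using f by auto
  have EN0: "EN 0 f x = E" if x: "x \<in> space M" for x
  proof -
    have "EN 0 f x = (\<integral>y\<in>space M. f y \<partial>M) / measure M (space M)"
      unfolding EN_eq[OF x] cube0[OF x] ..
    also have "\<dots> = E" unfolding E_def using set_integral_space[OF f] by (simp add: prob_space)
    finally show ?thesis .
  qed
  have bndN: "(\<integral>\<^sup>+x. ennreal (exp (EN N f x - E)) \<partial>M) \<le> ennreal B" for N
  proof -
    have "AE x in M. ennreal (exp (EN N f x - E)) \<le> ennreal (Gs f N x) * ennreal B"
      using sq_bound[OF fin, of N]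
    proof (rule AE_mp, intro AE_I2 impI)
      fix x assume x: "x \<in> space M"
        and le: "(\<Sum>n<N. (EN (Suc n) f x - EN n f x)^2) \<le> (enn2real (esssup M (square_fun M D f)))^2"
      define S where "S = (\<Sum>n<N. (EN (Suc n) f x - EN n f x)^2)"
      have "exp (EN N f x - E) = exp ((EN N f x - EN 0 f x - (1/(4*\<alpha>)) * S) + (1/(4*\<alpha>)) * S)"
        using EN0[OF x] by simp
      also have "\<dots> = Gs f N x * exp ((1/(4*\<alpha>)) * S)" unfolding Gs_def S_def by (simp only: exp_add)
      also have "\<dots> \<le> Gs f N x * B"
      proof (rule mult_left_mono)
        have "(1/(4*\<alpha>)) * S \<le> (1/(4*\<alpha>)) * s^2"
          using le a0 unfolding S_def s_def by (intro mult_left_mono) auto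
        then show "exp ((1/(4*\<alpha>)) * S) \<le> B" unfolding B_def by simp
        show "0 \<le> Gs f N x" unfolding Gs_def by simp
      qed
      finally show "ennreal (exp (EN N f x - E)) \<le> ennreal (Gs f N x) * ennreal B"
        unfolding B_def by (simp add: ennreal_mult[symmetric] Gs_def)
    qed
    then have "(\<integral>\<^sup>+x. ennreal (exp (EN N f x - E)) \<partial>M) \<le> (\<integral>\<^sup>+x. ennreal (Gs f N x) * ennreal B \<partial>M)"
      by (rule nn_integral_mono_AE)
    also have "\<dots> = (\<integral>\<^sup>+x. ennreal (Gs f N x) \<partial>M) * ennreal B" by (rule nn_integral_multc) measurable
    also have "\<dots> \<le> 1 * ennreal B" using super[OF f, of N] by (intro mult_right_mono) auto
    finally show ?thesis by simp
  qed
  have "\<exists>r. strict_mono r \<and> (AE x in M. (\<lambda>n. EN (r n) f x - f x) \<longlonglongrightarrow> 0)"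
  proof (rule tendsto_L1_AE_subseq)
    show "\<And>n. integrable M (\<lambda>x. EN n f x - f x)" using EN_integrable f by auto
    show "(\<lambda>n. \<integral>x. norm (EN n f x - f x) \<partial>M) \<longlonglongrightarrow> 0" by (rule L1_conv[OF f])
  qed
  then obtain r where r: "strict_mono r" "AE x in M. (\<lambda>n. EN (r n) f x - f x) \<longlonglongrightarrow> 0" by blast
  have conv: "AE x in M. (\<lambda>n. ennreal (exp (EN (r n) f x - E))) \<longlonglongrightarrow> ennreal (exp (f x - E))"
    using r(2)
  proof (rule AE_mp, intro AE_I2 impI)
    fix x assume "(\<lambda>n. EN (r n) f x - f x) \<longlonglongrightarrow> 0"
    then have "(\<lambda>n. (EN (r n) f x - f x) + f x) \<longlonglongrightarrow> 0 + f x" by (intro tendsto_add) auto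
    then have "(\<lambda>n. EN (r n) f x) \<longlonglongrightarrow> f x" by simp
    then show "(\<lambda>n. ennreal (exp (EN (r n) f x - E))) \<longlonglongrightarrow> ennreal (exp (f x - E))"
      by (intro tendsto_ennrealI tendsto_exp tendsto_diff) auto
  qed
  have "(\<integral>\<^sup>+x. ennreal (exp (f x - E)) \<partial>M) = (\<integral>\<^sup>+x. liminf (\<lambda>n. ennreal (exp (EN (r n) f x - E))) \<partial>M)"
  proof (rule nn_integral_cong_AE)
    show "AE x in M. ennreal (exp (f x - E)) = liminf (\<lambda>n. ennreal (exp (EN (r n) f x - E)))"
      using conv
    proof (rule AE_mp, intro AE_I2 impI)
      fix x assume "(\<lambda>n. ennreal (exp (EN (r n) f x - E))) \<longlonglongrightarrow> ennreal (exp (f x - E))"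
      then have "liminf (\<lambda>n. ennreal (exp (EN (r n) f x - E))) = ennreal (exp (f x - E))"
        by (intro lim_imp_Liminf) auto
      then show "ennreal (exp (f x - E)) = liminf (\<lambda>n. ennreal (exp (EN (r n) f x - E)))" by simp
    qed
  qed
  also have "\<dots> \<le> liminf (\<lambda>n. \<integral>\<^sup>+x. ennreal (exp (EN (r n) f x - E)) \<partial>M)"
    by (rule nn_integral_liminf) measurable
  also have "\<dots> \<le> limsup (\<lambda>n. \<integral>\<^sup>+x. ennreal (exp (EN (r n) f x - E)) \<partial>M)"
    by (rule Liminf_le_Limsup) simp
  also have "\<dots> \<le> ennreal B"
    using bndN by (intro Limsup_bounded) auto
  finally show ?thesis unfolding E_def B_def s_def by simp
qed

end

theorem theorem2p2:
  fixes M :: "'a measure" and F D :: "nat \<Rightarrow> 'a set set"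
    and \<alpha> :: real and f :: "'a \<Rightarrow> real"
  assumes "prob_space M"
    and "atomic_filtration M F D"
    and "homogeneous_filtration M D \<alpha>"
    and "0 < \<alpha>" and "\<alpha> \<le> 1/2"
    and "integrable M f"
    and "esssup M (square_fun M D f) < \<top>"
  shows "(\<integral>\<^sup>+x. ennreal (exp (f x - (\<integral>y. f y \<partial>M))) \<partial>M)
           \<le> ennreal (exp ((enn2real (esssup M (square_fun M D f)))\<^sup>2 / (4 * \<alpha>)))"
proof -
  interpret filt M F D \<alpha>
    using assms(1-5) by (simp add: filt_def filt_axioms_def)
  show ?thesis using main_loc[OF assms(6,7)] .
qed


end
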